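(* Let $\mathcal S$ be a $\Rsh$-closed $\diamond\cap$-closed subset of a finite multi-algebra $\mathcal A=\mathcal A_1\times\cdots\times\mathcal A_m$. If for all distinct $i,j\in\{1,\dots,m\}$ every network with only three variables over the bi-slice $\mathcal S_{i,j}$ is dissociable, then $\mathcal S$ is dissociable.
   Context: A finite non-associative algebra is a tuple $(\mathcal A,\cup,\neg,\emptyset,\mathcal B,\diamond,\overline{\cdot},e)$ where $(\mathcal A,\cup,\neg,\emptyset,\mathcal B)$ is a finite Boolean algebra (with $x\cap y=\neg(\neg x\cup\neg y)$) and for all $x,y,z$: $\overline{\overline x}=x$, $\overline{x\cup y}=\overline x\cup\overline y$, $\overline{x\diamond y}=\overline y\diamond\overline x$, $e\diamond x=x\diamond e=x$, $x\diamond(y\cup z)=(x\diamond y)\cup(x\diamond z)$, $(x\diamond y)\cap\overline z=\emptyset\iff(y\diamond z)\cap\overline x=\emptyset$. $r\subseteq r'$ means $r\cup r'=r'$. A projection operator from $\mathcal A$ to $\mathcal A'$ is a map $\Rsh$ with $\Rsh(r\cup r')=\Rsh r\cup\Rsh r'$ and $\Rsh\overline r=\overline{\Rsh r}$. A finite multi-algebra is a product $\mathcal A_1\times\cdots\times\mathcal A_m$ of finite non-associative algebras with projection operators $\Rsh_i^j:\mathcal A_i\to\mathcal A_j$ for all distinct $i,j$; $\subseteq,\diamond,\cap,\overline{\cdot}$ on relations $R=(R_1,\dots,R_m)$ componentwise. $R$ is closed under projection if $R_j\subseteq\Rsh_i^jR_i$ for all distinct $i,j$; the projection closure $\Rsh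 R$ is obtained by repeatedly replacing $R_j$ by $R_j\cap\Rsh_i^jR_i$ until a fixed point. A network over $\mathcal S\subseteq\mathcal A$ is a finite set $E$ of variables with $N^{xy}\in\mathcal S$ for all distinct $x,y\in E$, $N^{yx}=\overline{N^{xy}}$; $N_i^{xy}=(N^{xy})_i$. $N$ is trivially inconsistent if some $N_i^{xy}=\emptyset$; closed under composition if $N^{xz}\subseteq N^{xy}\diamond N^{yz}$ for all distinct $x,y,z$; closed under projection if all $N^{xy}$ are; algebraically consistent if closed under both and not trivially inconsistent. $N$ is dissociable if replacing each $N^{xy}$ by $\Rsh N^{xy}$ and then closing under composition (repeating $N^{xz}\leftarrow N^{xz}\cap(N^{xy}\diamond N^{yz})$ to a fixed point) yields a network that is algebraically consistent or trivially inconsistent; a subset is dissociable if every network over it is. $\mathcal S$ is $\diamond\cap$-closed if $(R\diamond R')\cap R''\in\mathcal S$ for all $R,R',R''\in\mathcal S$, and $\Rsh$-closed if $\Rsh R\in\mathcal S$ for all $R\in\mathcal S$. The bi-slice $\mathcal A_{i,j}$ is the multi-algebra $\mathcal A_i\times\mathcal A_j$ with projections $\Rsh_i^j,\Rsh_j^i$; the bi-slice of $\mathcal S$ is $\mathcal S_{i,j}=\{(R_i,R_j):R\in\mathcal S\}\subseteq\mathcal A_{i,j}$. *)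

theory Defs
  imports Main "HOL-Library.While_Combinator"
begin

record 'a nalg =
  carrier :: "'a set"
  join :: "'a \<Rightarrow> 'a \<Rightarrow> 'a"
  neg :: "'a \<Rightarrow> 'a"
  bot :: 'a
  top :: 'a
  comp :: "'a \<Rightarrow> 'a \<Rightarrow> 'a"
  conv :: "'a \<Rightarrow> 'a"
  ident :: 'a

definition meet :: "('a, 'b) nalg_scheme \<Rightarrow> 'a \<Rightarrow> 'a \<Rightarrow> 'a" where
  "meet A x y = neg A (join A (neg A x) (neg A y))"

definition le :: "('a, 'b) nalg_scheme \<Rightarrow> 'a \<Rightarrow> 'a \<Rightarrow> bool" where
  "le A x y \<longleftrightarrow> join A x y = y"

text \<open>Finite Boolean algebra on the carrier (Huntington's postulates, meet defined by De Morgan).\<close>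
definition finite_boolean_algebra :: "('a, 'b) nalg_scheme \<Rightarrow> bool" where
  "finite_boolean_algebra A \<longleftrightarrow>
     finite (carrier A) \<and> bot A \<in> carrier A \<and> top A \<in> carrier A \<and>
     (\<forall>x\<in>carrier A. \<forall>y\<in>carrier A. join A x y \<in> carrier A) \<and>
     (\<forall>x\<in>carrier A. neg A x \<in> carrier A) \<and>
     (\<forall>x\<in>carrier A. \<forall>y\<in>carrier A. \<forall>z\<in>carrier A.
        join A x y = join A y x \<and> meet A x y = meet A y x \<and>
        join A x (meet A y z) = meet A (join A x y) (join A x z) \<and>
        meet A x (join A y z) = join A (meet A x y) (meet A x z) \<and>
        join A x (bot A) = x \<and> meet A x (top A) = x \<and>
        join A x (neg A x) = top A \<and> meet A x (neg A x) = bot A)"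

definition nalg :: "('a, 'b) nalg_scheme \<Rightarrow> bool" where
  "nalg A \<longleftrightarrow> finite_boolean_algebra A \<and> ident A \<in> carrier A \<and>
     (\<forall>x\<in>carrier A. \<forall>y\<in>carrier A. comp A x y \<in> carrier A) \<and>
     (\<forall>x\<in>carrier A. conv A x \<in> carrier A) \<and>
     (\<forall>x\<in>carrier A. \<forall>y\<in>carrier A. \<forall>z\<in>carrier A.
        conv A (conv A x) = x \<and>
        conv A (join A x y) = join A (conv A x) (conv A y) \<and>
        conv A (comp A x y) = comp A (conv A y) (conv A x) \<and>
        comp A (ident A) x = x \<and> comp A x (ident A) = x \<and>
        comp A x (join A y z) = join A (comp A x y) (comp A x z) \<and>
        (meet A (comp A x y) (conv A z) = bot A \<longleftrightarrow>
         meet A (comp A y z) (conv A x) = bot A))"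

text \<open>A multi-algebra with m components (indexed 0..<m), components A i and
  projection operators P i j : A i \<rightarrow> A j for distinct i, j.
  Relations are lists of length m.\<close>

definition multi_algebra ::
  "nat \<Rightarrow> (nat \<Rightarrow> 'a nalg) \<Rightarrow> (nat \<Rightarrow> nat \<Rightarrow> 'a \<Rightarrow> 'a) \<Rightarrow> bool" where
  "multi_algebra m A P \<longleftrightarrow>
     (\<forall>i<m. nalg (A i)) \<and>
     (\<forall>i<m. \<forall>j<m. i \<noteq> j \<longrightarrow>
        (\<forall>r\<in>carrier (A i). P i j r \<in> carrier (A j) \<and>
           P i j (conv (A i) r) = conv (A j) (P i j r) \<and>
           (\<forall>r'\<in>carrier (A i). P i j (join (A i) r r') = join (A j) (P i j r) (P i j r'))))"

definition is_rel :: "nat \<Rightarrow> (nat \<Rightarrow> 'a nalg) \<Rightarrow> 'a list \<Rightarrow> bool" where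
  "is_rel m A R \<longleftrightarrow> length R = m \<and> (\<forall>i<m. R ! i \<in> carrier (A i))"

definition rcomp :: "nat \<Rightarrow> (nat \<Rightarrow> 'a nalg) \<Rightarrow> 'a list \<Rightarrow> 'a list \<Rightarrow> 'a list" where
  "rcomp m A R R' = map (\<lambda>i. comp (A i) (R ! i) (R' ! i)) [0..<m]"

definition rmeet :: "nat \<Rightarrow> (nat \<Rightarrow> 'a nalg) \<Rightarrow> 'a list \<Rightarrow> 'a list \<Rightarrow> 'a list" where
  "rmeet m A R R' = map (\<lambda>i. meet (A i) (R ! i) (R' ! i)) [0..<m]"

definition rconv :: "nat \<Rightarrow> (nat \<Rightarrow> 'a nalg) \<Rightarrow> 'a list \<Rightarrow> 'a list" where
  "rconv m A R = map (\<lambda>i. conv (A i) (R ! i)) [0..<m]"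

definition rle :: "nat \<Rightarrow> (nat \<Rightarrow> 'a nalg) \<Rightarrow> 'a list \<Rightarrow> 'a list \<Rightarrow> bool" where
  "rle m A R R' \<longleftrightarrow> (\<forall>i<m. le (A i) (R ! i) (R' ! i))"

definition proj_closed ::
  "nat \<Rightarrow> (nat \<Rightarrow> 'a nalg) \<Rightarrow> (nat \<Rightarrow> nat \<Rightarrow> 'a \<Rightarrow> 'a) \<Rightarrow> 'a list \<Rightarrow> bool" where
  "proj_closed m A P R \<longleftrightarrow>
     (\<forall>i<m. \<forall>j<m. i \<noteq> j \<longrightarrow> le (A j) (R ! j) (P i j (R ! i)))"

definition proj_pair_step ::
  "(nat \<Rightarrow> 'a nalg) \<Rightarrow> (nat \<Rightarrow> nat \<Rightarrow> 'a \<Rightarrow> 'a) \<Rightarrow> nat \<times> nat \<Rightarrow> 'a list \<Rightarrow> 'a list" where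
  "proj_pair_step A P ij R =
     (case ij of (i, j) \<Rightarrow> R[j := meet (A j) (R ! j) (P i j (R ! i))])"

definition proj_round ::
  "nat \<Rightarrow> (nat \<Rightarrow> 'a nalg) \<Rightarrow> (nat \<Rightarrow> nat \<Rightarrow> 'a \<Rightarrow> 'a) \<Rightarrow> 'a list \<Rightarrow> 'a list" where
  "proj_round m A P R =
     fold (proj_pair_step A P) [(i, j). i \<leftarrow> [0..<m], j \<leftarrow> [0..<m], i \<noteq> j] R"

definition proj_closure ::
  "nat \<Rightarrow> (nat \<Rightarrow> 'a nalg) \<Rightarrow> (nat \<Rightarrow> nat \<Rightarrow> 'a \<Rightarrow> 'a) \<Rightarrow> 'a list \<Rightarrow> 'a list" where
  "proj_closure m A P R =
     the (while_option (\<lambda>R. proj_round m A P R \<noteq> R) (proj_round m A P) R)"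

definition network_over ::
  "nat \<Rightarrow> (nat \<Rightarrow> 'a nalg) \<Rightarrow> 'a list set \<Rightarrow> nat set \<Rightarrow> (nat \<Rightarrow> nat \<Rightarrow> 'a list) \<Rightarrow> bool" where
  "network_over m A S E N \<longleftrightarrow> finite E \<and>
     (\<forall>x\<in>E. \<forall>y\<in>E. x \<noteq> y \<longrightarrow> N x y \<in> S \<and> N y x = rconv m A (N x y))"

definition triv_inconsistent ::
  "nat \<Rightarrow> (nat \<Rightarrow> 'a nalg) \<Rightarrow> nat set \<Rightarrow> (nat \<Rightarrow> nat \<Rightarrow> 'a list) \<Rightarrow> bool" where
  "triv_inconsistent m A E N \<longleftrightarrow>
     (\<exists>x\<in>E. \<exists>y\<in>E. x \<noteq> y \<and> (\<exists>i<m. N x y ! i = bot (A i)))"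

definition comp_closed ::
  "nat \<Rightarrow> (nat \<Rightarrow> 'a nalg) \<Rightarrow> nat set \<Rightarrow> (nat \<Rightarrow> nat \<Rightarrow> 'a list) \<Rightarrow> bool" where
  "comp_closed m A E N \<longleftrightarrow>
     (\<forall>x\<in>E. \<forall>y\<in>E. \<forall>z\<in>E. x \<noteq> y \<and> y \<noteq> z \<and> x \<noteq> z \<longrightarrow>
        rle m A (N x z) (rcomp m A (N x y) (N y z)))"

definition net_proj_closed ::
  "nat \<Rightarrow> (nat \<Rightarrow> 'a nalg) \<Rightarrow> (nat \<Rightarrow> nat \<Rightarrow> 'a \<Rightarrow> 'a) \<Rightarrow> nat set \<Rightarrow> (nat \<Rightarrow> nat \<Rightarrow> 'a list) \<Rightarrow> bool" where
  "net_proj_closed m A P E N \<longleftrightarrow>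
     (\<forall>x\<in>E. \<forall>y\<in>E. x \<noteq> y \<longrightarrow> proj_closed m A P (N x y))"

definition alg_consistent ::
  "nat \<Rightarrow> (nat \<Rightarrow> 'a nalg) \<Rightarrow> (nat \<Rightarrow> nat \<Rightarrow> 'a \<Rightarrow> 'a) \<Rightarrow> nat set \<Rightarrow> (nat \<Rightarrow> nat \<Rightarrow> 'a list) \<Rightarrow> bool" where
  "alg_consistent m A P E N \<longleftrightarrow>
     comp_closed m A E N \<and> net_proj_closed m A P E N \<and> \<not> triv_inconsistent m A E N"

definition comp_triple_step ::
  "nat \<Rightarrow> (nat \<Rightarrow> 'a nalg) \<Rightarrow> nat \<times> nat \<times> nat \<Rightarrow> (nat \<Rightarrow> nat \<Rightarrow> 'a list) \<Rightarrow> (nat \<Rightarrow> nat \<Rightarrow> 'a list)" where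
  "comp_triple_step m A xyz N =
     (case xyz of (x, y, z) \<Rightarrow>
        (let r = rmeet m A (N x z) (rcomp m A (N x y) (N y z))
         in (\<lambda>a b. if a = x \<and> b = z then r
                    else if a = z \<and> b = x then rconv m A r
                    else N a b)))"

definition comp_round ::
  "nat \<Rightarrow> (nat \<Rightarrow> 'a nalg) \<Rightarrow> nat set \<Rightarrow> (nat \<Rightarrow> nat \<Rightarrow> 'a list) \<Rightarrow> (nat \<Rightarrow> nat \<Rightarrow> 'a list)" where
  "comp_round m A E N =
     fold (comp_triple_step m A)
       [(x, y, z). x \<leftarrow> sorted_list_of_set E, y \<leftarrow> sorted_list_of_set E,
                   z \<leftarrow> sorted_list_of_set E, x \<noteq> y \<and> y \<noteq> z \<and> x \<noteq> z] N"

definition comp_closure ::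
  "nat \<Rightarrow> (nat \<Rightarrow> 'a nalg) \<Rightarrow> nat set \<Rightarrow> (nat \<Rightarrow> nat \<Rightarrow> 'a list) \<Rightarrow> (nat \<Rightarrow> nat \<Rightarrow> 'a list)" where
  "comp_closure m A E N =
     the (while_option (\<lambda>N. comp_round m A E N \<noteq> N) (comp_round m A E) N)"

definition dissociable_net ::
  "nat \<Rightarrow> (nat \<Rightarrow> 'a nalg) \<Rightarrow> (nat \<Rightarrow> nat \<Rightarrow> 'a \<Rightarrow> 'a) \<Rightarrow> nat set \<Rightarrow> (nat \<Rightarrow> nat \<Rightarrow> 'a list) \<Rightarrow> bool" where
  "dissociable_net m A P E N \<longleftrightarrow>
     (let N' = comp_closure m A E (\<lambda>x y. proj_closure m A P (N x y))
      in alg_consistent m A P E N' \<or> triv_inconsistent m A E N')"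

definition dissociable_set ::
  "nat \<Rightarrow> (nat \<Rightarrow> 'a nalg) \<Rightarrow> (nat \<Rightarrow> nat \<Rightarrow> 'a \<Rightarrow> 'a) \<Rightarrow> 'a list set \<Rightarrow> bool" where
  "dissociable_set m A P S \<longleftrightarrow>
     (\<forall>E N. network_over m A S E N \<longrightarrow> dissociable_net m A P E N)"

definition proj_closed_set ::
  "nat \<Rightarrow> (nat \<Rightarrow> 'a nalg) \<Rightarrow> (nat \<Rightarrow> nat \<Rightarrow> 'a \<Rightarrow> 'a) \<Rightarrow> 'a list set \<Rightarrow> bool" where
  "proj_closed_set m A P S \<longleftrightarrow> (\<forall>R\<in>S. proj_closure m A P R \<in> S)"

definition comp_meet_closed_set :: "nat \<Rightarrow> (nat \<Rightarrow> 'a nalg) \<Rightarrow> 'a list set \<Rightarrow> bool" where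
  "comp_meet_closed_set m A S \<longleftrightarrow>
     (\<forall>R\<in>S. \<forall>R'\<in>S. \<forall>R''\<in>S. rmeet m A (rcomp m A R R') R'' \<in> S)"

definition bislice_alg :: "(nat \<Rightarrow> 'a nalg) \<Rightarrow> nat \<Rightarrow> nat \<Rightarrow> (nat \<Rightarrow> 'a nalg)" where
  "bislice_alg A i j = (\<lambda>k. if k = 0 then A i else A j)"

definition bislice_proj ::
  "(nat \<Rightarrow> nat \<Rightarrow> 'a \<Rightarrow> 'a) \<Rightarrow> nat \<Rightarrow> nat \<Rightarrow> (nat \<Rightarrow> nat \<Rightarrow> 'a \<Rightarrow> 'a)" where
  "bislice_proj P i j = (\<lambda>a b. if a = 0 then P i j else P j i)"

definition bislice_set :: "'a list set \<Rightarrow> nat \<Rightarrow> nat \<Rightarrow> 'a list set" where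
  "bislice_set S i j = (\<lambda>R. [R ! i, R ! j]) ` S"

end

theory Submission
  imports Defs
begin


context
  fixes B :: "('a,'b) nalg_scheme"
  assumes fba: "finite_boolean_algebra B"
begin

lemma cl_bot[simp]: "bot B \<in> carrier B" and cl_top[simp]: "top B \<in> carrier B"
  using fba unfolding finite_boolean_algebra_def by auto
lemma cl_join[simp]: "x \<in> carrier B \<Longrightarrow> y \<in> carrier B \<Longrightarrow> join B x y \<in> carrier B"
  using fba unfolding finite_boolean_algebra_def by auto
lemma cl_neg[simp]: "x \<in> carrier B \<Longrightarrow> neg B x \<in> carrier B"
  using fba unfolding finite_boolean_algebra_def by auto
lemma cl_meet[simp]: "x \<in> carrier B \<Longrightarrow> y \<in> carrier B \<Longrightarrow> meet B x y \<in> carrier B"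
  unfolding meet_def by simp
lemma fin_car: "finite (carrier B)"
  using fba unfolding finite_boolean_algebra_def by auto

lemma ax:
  assumes "x \<in> carrier B" "y \<in> carrier B" "z \<in> carrier B"
  shows "join B x y = join B y x" "meet B x y = meet B y x"
    "join B x (meet B y z) = meet B (join B x y) (join B x z)"
    "meet B x (join B y z) = join B (meet B x y) (meet B x z)"
    "join B x (bot B) = x" "meet B x (top B) = x"
    "join B x (neg B x) = top B" "meet B x (neg B x) = bot B"
  using fba assms unfolding finite_boolean_algebra_def by blast+

lemma jcomm: "x \<in> carrier B \<Longrightarrow> y \<in> carrier B \<Longrightarrow> join B x y = join B y x"
  using ax(1)[of x y x] by simp
lemma mcomm: "x \<in> carrier B \<Longrightarrow> y \<in> carrier B \<Longrightarrow> meet B x y = meet B y x"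
  using ax(2)[of x y x] by simp
lemma jdist: "x \<in> carrier B \<Longrightarrow> y \<in> carrier B \<Longrightarrow> z \<in> carrier B \<Longrightarrow>
   join B x (meet B y z) = meet B (join B x y) (join B x z)"
  using ax(3) by blast
lemma mdist: "x \<in> carrier B \<Longrightarrow> y \<in> carrier B \<Longrightarrow> z \<in> carrier B \<Longrightarrow>
   meet B x (join B y z) = join B (meet B x y) (meet B x z)"
  using ax(4) by blast
lemma jbot: "x \<in> carrier B \<Longrightarrow> join B x (bot B) = x" using ax(5)[of x x x] by simp
lemma mtop: "x \<in> carrier B \<Longrightarrow> meet B x (top B) = x" using ax(6)[of x x x] by simp
lemma jneg: "x \<in> carrier B \<Longrightarrow> join B x (neg B x) = top B" using ax(7)[of x x x] by simp
lemma mneg: "x \<in> carrier B \<Longrightarrow> meet B x (neg B x) = bot B" using ax(8)[of x x x] by simp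

lemma jidem: assumes x: "x \<in> carrier B" shows "join B x x = x"
proof -
  have "join B x x = meet B (join B x x) (join B x (neg B x))" using x by (simp add: mtop jneg)
  also have "\<dots> = join B x (meet B x (neg B x))" using x by (simp add: jdist)
  also have "\<dots> = x" using x by (simp add: mneg jbot)
  finally show ?thesis .
qed

lemma jtop: assumes x: "x \<in> carrier B" shows "join B x (top B) = top B"
proof -
  have "join B x (top B) = meet B (top B) (join B x (top B))"
    using x mtop[of "join B x (top B)"] mcomm[of "top B" "join B x (top B)"] by simp
  also have "\<dots> = meet B (join B x (neg B x)) (join B x (top B))"
    using x by (simp add: jneg)
  also have "\<dots> = join B x (meet B (neg B x) (top B))" using x by (simp add: jdist)
  also have "\<dots> = top B" using x by (simp add: mtop jneg)
  finally show ?thesis .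
qed

lemma mbot: assumes x: "x \<in> carrier B" shows "meet B x (bot B) = bot B"
proof -
  have "meet B x (bot B) = join B (bot B) (meet B x (bot B))"
    using x jbot[of "meet B x (bot B)"] jcomm[of "bot B" "meet B x (bot B)"] by simp
  also have "\<dots> = join B (meet B x (neg B x)) (meet B x (bot B))"
    using x by (simp add: mneg)
  also have "\<dots> = meet B x (join B (neg B x) (bot B))" using x by (simp add: mdist)
  also have "\<dots> = bot B" using x by (simp add: jbot mneg)
  finally show ?thesis .
qed

lemma absorb1: assumes x: "x \<in> carrier B" and y: "y \<in> carrier B"
  shows "join B x (meet B x y) = x"
proof -
  have "join B x (meet B x y) = join B (meet B x (top B)) (meet B x y)" using x by (simp add: mtop)
  also have "\<dots> = meet B x (join B (top B) y)" using x y by (simp add: mdist)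
  also have "\<dots> = x" using x y by (simp add: jcomm[of "top B" y] jtop mtop)
  finally show ?thesis .
qed

lemma absorb2: assumes x: "x \<in> carrier B" and y: "y \<in> carrier B"
  shows "meet B x (join B x y) = x"
proof -
  have "meet B x (join B x y) = meet B (join B x (bot B)) (join B x y)" using x by (simp add: jbot)
  also have "\<dots> = join B x (meet B (bot B) y)" using x y by (simp add: jdist)
  also have "\<dots> = x" using x y by (simp add: mcomm[of "bot B" y] mbot jbot)
  finally show ?thesis .
qed

lemma jassoc: assumes x: "x \<in> carrier B" and y: "y \<in> carrier B" and z: "z \<in> carrier B"
  shows "join B x (join B y z) = join B (join B x y) z"
proof -
  define a where "a = join B x (join B y z)"
  define b where "b = join B (join B x y) z"
  have ac: "a \<in> carrier B" and bc: "b \<in> carrier B" using x y z by (simp_all add: a_def b_def)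
  have jb: "join B (bot B) w = w" if "w \<in> carrier B" for w using that by (simp add: jcomm jbot)
  have 1: "meet B x a = x" unfolding a_def using x y z by (simp add: absorb2)
  have 2: "meet B x b = x" unfolding b_def using x y z
    mdist[of x "join B x y" z] absorb2[of x y] absorb1[of x z] by simp
  have 3: "meet B (neg B x) a = meet B (neg B x) (join B y z)" unfolding a_def using x y z
    by (simp add: mdist mcomm[of "neg B x" x] mneg jb)
  have 4: "meet B (neg B x) b = meet B (neg B x) (join B y z)" unfolding b_def using x y z
    by (simp add: mdist mcomm[of "neg B x" x] mneg jb)
  have e: "w = join B (meet B x w) (meet B (neg B x) w)" if w: "w \<in> carrier B" for w
  proof -
    have "w = meet B w (join B x (neg B x))" using w x by (simp add: mtop jneg)
    also have "\<dots> = join B (meet B w x) (meet B w (neg B x))" using w x by (simp add: mdist)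
    also have "\<dots> = join B (meet B x w) (meet B (neg B x) w)" using w x by (simp add: mcomm)
    finally show ?thesis .
  qed
  have "a = b" using e[OF ac] e[OF bc] 1 2 3 4 by simp
  then show ?thesis by (simp add: a_def b_def)
qed

lemma le_refl: "x \<in> carrier B \<Longrightarrow> le B x x" by (simp add: le_def jidem)
lemma le_antisym: "x \<in> carrier B \<Longrightarrow> y \<in> carrier B \<Longrightarrow> le B x y \<Longrightarrow> le B y x \<Longrightarrow> x = y"
  by (simp add: le_def jcomm)
lemma le_trans: "x \<in> carrier B \<Longrightarrow> y \<in> carrier B \<Longrightarrow> z \<in> carrier B \<Longrightarrow> le B x y \<Longrightarrow> le B y z \<Longrightarrow> le B x z"
  unfolding le_def by (metis jassoc)
lemma meet_le1: "x \<in> carrier B \<Longrightarrow> y \<in> carrier B \<Longrightarrow> le B (meet B x y) x"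
  unfolding le_def by (simp add: jcomm absorb1)
lemma meet_le2: "x \<in> carrier B \<Longrightarrow> y \<in> carrier B \<Longrightarrow> le B (meet B x y) y"
  unfolding le_def by (metis mcomm jcomm absorb1 cl_meet)
lemma meet_glb: "x \<in> carrier B \<Longrightarrow> y \<in> carrier B \<Longrightarrow> z \<in> carrier B \<Longrightarrow> le B z x \<Longrightarrow> le B z y \<Longrightarrow> le B z (meet B x y)"
  unfolding le_def by (simp add: jdist)
lemma meet_eq_iff: "x \<in> carrier B \<Longrightarrow> y \<in> carrier B \<Longrightarrow> meet B x y = x \<longleftrightarrow> le B x y"
  unfolding le_def by (metis absorb2 absorb1 jcomm mcomm cl_meet)
lemma le_bot: "x \<in> carrier B \<Longrightarrow> le B x (bot B) \<Longrightarrow> x = bot B"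
  unfolding le_def by (simp add: jbot)
lemma join_mono_le: "x \<in> carrier B \<Longrightarrow> y \<in> carrier B \<Longrightarrow> le B x (join B x y)"
  unfolding le_def by (simp add: jassoc jidem)
lemma meet_mono: "x \<in> carrier B \<Longrightarrow> y \<in> carrier B \<Longrightarrow> x' \<in> carrier B \<Longrightarrow> y' \<in> carrier B \<Longrightarrow>
   le B x x' \<Longrightarrow> le B y y' \<Longrightarrow> le B (meet B x y) (meet B x' y')"
  by (meson cl_meet le_trans meet_glb meet_le1 meet_le2)

end


lemma nalg_fba: "nalg B \<Longrightarrow> finite_boolean_algebra B" by (simp add: nalg_def)

context
  fixes B :: "('a,'b) nalg_scheme"
  assumes na: "nalg B"
begin

lemma fb: "finite_boolean_algebra B" using na by (simp add: nalg_def)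

lemma cl_comp[simp]: "x \<in> carrier B \<Longrightarrow> y \<in> carrier B \<Longrightarrow> comp B x y \<in> carrier B"
  using na unfolding nalg_def by auto
lemma cl_conv[simp]: "x \<in> carrier B \<Longrightarrow> conv B x \<in> carrier B"
  using na unfolding nalg_def by auto
lemma nax:
  assumes "x \<in> carrier B" "y \<in> carrier B" "z \<in> carrier B"
  shows "conv B (conv B x) = x" "conv B (join B x y) = join B (conv B x) (conv B y)"
    "conv B (comp B x y) = comp B (conv B y) (conv B x)"
    "comp B x (join B y z) = join B (comp B x y) (comp B x z)"
  using na assms unfolding nalg_def by blast+

lemma conv_conv[simp]: "x \<in> carrier B \<Longrightarrow> conv B (conv B x) = x" using nax(1)[of x x x] by simp
lemma conv_join: "x \<in> carrier B \<Longrightarrow> y \<in> carrier B \<Longrightarrow> conv B (join B x y) = join B (conv B x) (conv B y)"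
  using nax(2)[of x y x] by simp
lemma conv_comp: "x \<in> carrier B \<Longrightarrow> y \<in> carrier B \<Longrightarrow> conv B (comp B x y) = comp B (conv B y) (conv B x)"
  using nax(3)[of x y x] by simp
lemma comp_joinr: "x \<in> carrier B \<Longrightarrow> y \<in> carrier B \<Longrightarrow> z \<in> carrier B \<Longrightarrow> comp B x (join B y z) = join B (comp B x y) (comp B x z)"
  using nax(4) by blast

lemma comp_joinl: assumes "x \<in> carrier B" "y \<in> carrier B" "z \<in> carrier B"
  shows "comp B (join B y z) x = join B (comp B y x) (comp B z x)"
proof -
  have "comp B (join B y z) x = conv B (conv B (comp B (join B y z) x))" using assms fb by simp
  also have "\<dots> = conv B (comp B (conv B x) (join B (conv B y) (conv B z)))"
    using assms fb by (simp add: conv_comp conv_join)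
  also have "\<dots> = join B (comp B y x) (comp B z x)"
    using assms fb by (simp add: comp_joinr conv_join conv_comp)
  finally show ?thesis .
qed

lemma comp_mono_r: "x \<in> carrier B \<Longrightarrow> y \<in> carrier B \<Longrightarrow> y' \<in> carrier B \<Longrightarrow> le B y y' \<Longrightarrow> le B (comp B x y) (comp B x y')"
  unfolding le_def by (metis comp_joinr)
lemma comp_mono_l: "x \<in> carrier B \<Longrightarrow> y \<in> carrier B \<Longrightarrow> y' \<in> carrier B \<Longrightarrow> le B y y' \<Longrightarrow> le B (comp B y x) (comp B y' x)"
  unfolding le_def by (metis comp_joinl)
lemma comp_mono: "x \<in> carrier B \<Longrightarrow> y \<in> carrier B \<Longrightarrow> x' \<in> carrier B \<Longrightarrow> y' \<in> carrier B \<Longrightarrow>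
  le B x x' \<Longrightarrow> le B y y' \<Longrightarrow> le B (comp B x y) (comp B x' y')"
  by (meson comp_mono_l comp_mono_r cl_comp le_trans[OF fb])
lemma conv_mono: "x \<in> carrier B \<Longrightarrow> y \<in> carrier B \<Longrightarrow> le B x y \<Longrightarrow> le B (conv B x) (conv B y)"
  unfolding le_def by (metis conv_join)
lemma conv_meet: assumes x: "x \<in> carrier B" and y: "y \<in> carrier B"
  shows "conv B (meet B x y) = meet B (conv B x) (conv B y)"
proof (rule le_antisym[OF fb])
  show "le B (conv B (meet B x y)) (meet B (conv B x) (conv B y))"
    using x y fb by (simp add: meet_glb conv_mono meet_le1 meet_le2)
  have "le B (conv B (meet B (conv B x) (conv B y))) (meet B x y)"
    using x y fb conv_mono[of "meet B (conv B x) (conv B y)" "conv B x"]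
      conv_mono[of "meet B (conv B x) (conv B y)" "conv B y"]
    by (simp add: meet_glb meet_le1 meet_le2)
  then have "le B (conv B (conv B (meet B (conv B x) (conv B y)))) (conv B (meet B x y))"
    using x y fb by (intro conv_mono) simp_all
  then show "le B (meet B (conv B x) (conv B y)) (conv B (meet B x y))"
    using x y fb by simp
qed (use x y fb in simp_all)

end


lemma nth_rcomp[simp]: "k < m \<Longrightarrow> rcomp m A R R' ! k = comp (A k) (R!k) (R'!k)"
  by (simp add: rcomp_def)
lemma nth_rmeet[simp]: "k < m \<Longrightarrow> rmeet m A R R' ! k = meet (A k) (R!k) (R'!k)"
  by (simp add: rmeet_def)
lemma nth_rconv[simp]: "k < m \<Longrightarrow> rconv m A R ! k = conv (A k) (R!k)"
  by (simp add: rconv_def)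
lemma len_r[simp]: "length (rcomp m A R R') = m" "length (rmeet m A R R') = m" "length (rconv m A R) = m"
  by (simp_all add: rcomp_def rmeet_def rconv_def)

definition rsize :: "nat \<Rightarrow> (nat \<Rightarrow> 'a nalg) \<Rightarrow> 'a list \<Rightarrow> nat" where
  "rsize m A R = (\<Sum>k<m. card {t \<in> carrier (A k). le (A k) t (R!k)})"

context
  fixes m :: nat and A :: "nat \<Rightarrow> 'a nalg"
  assumes nal: "\<forall>k<m. nalg (A k)"
begin

lemma nalk: "k < m \<Longrightarrow> nalg (A k)" using nal by simp
lemma fbk: "k < m \<Longrightarrow> finite_boolean_algebra (A k)" using nal by (simp add: nalg_def)

lemma is_rel_nth: "is_rel m A R \<Longrightarrow> k < m \<Longrightarrow> R!k \<in> carrier (A k)" by (simp add: is_rel_def)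

lemma is_rel_ops[simp]:
  "is_rel m A R \<Longrightarrow> is_rel m A R' \<Longrightarrow> is_rel m A (rcomp m A R R')"
  "is_rel m A R \<Longrightarrow> is_rel m A R' \<Longrightarrow> is_rel m A (rmeet m A R R')"
  "is_rel m A R \<Longrightarrow> is_rel m A (rconv m A R)"
  by (auto simp: is_rel_def nalk fbk)

lemma rle_refl: "is_rel m A R \<Longrightarrow> rle m A R R"
  by (simp add: rle_def is_rel_def le_refl fbk)
lemma rle_trans: "is_rel m A R \<Longrightarrow> is_rel m A R' \<Longrightarrow> is_rel m A R'' \<Longrightarrow> rle m A R R' \<Longrightarrow> rle m A R' R'' \<Longrightarrow> rle m A R R''"
  unfolding rle_def is_rel_def
proof (intro allI impI)
  fix i assume h: "length R = m \<and> (\<forall>i<m. R ! i \<in> carrier (A i))" "length R' = m \<and> (\<forall>i<m. R' ! i \<in> carrier (A i))"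
    "length R'' = m \<and> (\<forall>i<m. R'' ! i \<in> carrier (A i))" "\<forall>i<m. le (A i) (R ! i) (R' ! i)"
    "\<forall>i<m. le (A i) (R' ! i) (R'' ! i)" and i: "i < m"
  then show "le (A i) (R ! i) (R'' ! i)" using le_trans[OF fbk[OF i], of "R!i" "R'!i" "R''!i"] by auto
qed
lemma rle_antisym: "is_rel m A R \<Longrightarrow> is_rel m A R' \<Longrightarrow> rle m A R R' \<Longrightarrow> rle m A R' R \<Longrightarrow> R = R'"
  unfolding rle_def is_rel_def by (metis fbk le_antisym nth_equalityI)
lemma rmeet_le1: "is_rel m A R \<Longrightarrow> is_rel m A R' \<Longrightarrow> rle m A (rmeet m A R R') R"
  unfolding rle_def is_rel_def by (simp add: fbk meet_le1)
lemma rmeet_le2: "is_rel m A R \<Longrightarrow> is_rel m A R' \<Longrightarrow> rle m A (rmeet m A R R') R'"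
  unfolding rle_def is_rel_def by (simp add: fbk meet_le2)
lemma rmeet_glb: "is_rel m A R \<Longrightarrow> is_rel m A R' \<Longrightarrow> is_rel m A Q \<Longrightarrow> rle m A Q R \<Longrightarrow> rle m A Q R' \<Longrightarrow> rle m A Q (rmeet m A R R')"
  unfolding rle_def is_rel_def by (simp add: fbk meet_glb)
lemma rcomp_mono: "is_rel m A R \<Longrightarrow> is_rel m A R' \<Longrightarrow> is_rel m A Q \<Longrightarrow> is_rel m A Q' \<Longrightarrow>
   rle m A Q R \<Longrightarrow> rle m A Q' R' \<Longrightarrow> rle m A (rcomp m A Q Q') (rcomp m A R R')"
  unfolding rle_def is_rel_def by (simp add: nalk comp_mono)
lemma rconv_mono: "is_rel m A R \<Longrightarrow> is_rel m A Q \<Longrightarrow> rle m A Q R \<Longrightarrow> rle m A (rconv m A Q) (rconv m A R)"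
  unfolding rle_def is_rel_def by (simp add: nalk conv_mono)
lemma rconv_rconv[simp]: "is_rel m A R \<Longrightarrow> rconv m A (rconv m A R) = R"
  unfolding is_rel_def by (auto intro!: nth_equalityI simp: nalk)
lemma rconv_rmeet: "is_rel m A R \<Longrightarrow> is_rel m A R' \<Longrightarrow> rconv m A (rmeet m A R R') = rmeet m A (rconv m A R) (rconv m A R')"
  unfolding is_rel_def by (auto intro!: nth_equalityI simp: nalk conv_meet)
lemma rconv_rcomp: "is_rel m A R \<Longrightarrow> is_rel m A R' \<Longrightarrow> rconv m A (rcomp m A R R') = rcomp m A (rconv m A R') (rconv m A R)"
  unfolding is_rel_def by (auto intro!: nth_equalityI simp: nalk conv_comp)
lemma rmeet_eq_iff: "is_rel m A R \<Longrightarrow> is_rel m A R' \<Longrightarrow> rmeet m A R R' = R \<longleftrightarrow> rle m A R R'"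
proof
  assume r: "is_rel m A R" "is_rel m A R'"
  { assume "rmeet m A R R' = R" then show "rle m A R R'" using rmeet_le2[OF r] by simp }
  { assume "rle m A R R'" then show "rmeet m A R R' = R"
      using r by (metis rle_antisym rmeet_le1 rmeet_glb rle_refl is_rel_ops(2)) }
qed
lemma rle_bot: "is_rel m A R \<Longrightarrow> is_rel m A Q \<Longrightarrow> rle m A Q R \<Longrightarrow> k < m \<Longrightarrow> R!k = bot (A k) \<Longrightarrow> Q!k = bot (A k)"
  unfolding rle_def is_rel_def by (metis fbk le_bot)

lemma rsize_less: assumes "is_rel m A R" "is_rel m A R'" "rle m A R R'" "R \<noteq> R'"
  shows "rsize m A R < rsize m A R'"
proof -
  have sub: "{t \<in> carrier (A k). le (A k) t (R!k)} \<subseteq> {t \<in> carrier (A k). le (A k) t (R'!k)}" if k: "k < m" for k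
    using assms k unfolding is_rel_def rle_def by (auto intro: le_trans[OF fbk[OF k]])
  obtain k where k: "k < m" "R!k \<noteq> R'!k"
    using assms unfolding is_rel_def by (metis nth_equalityI)
  have "R'!k \<in> {t \<in> carrier (A k). le (A k) t (R'!k)}" using assms k by (simp add: is_rel_def le_refl fbk)
  moreover have "R'!k \<notin> {t \<in> carrier (A k). le (A k) t (R!k)}"
    using assms k unfolding is_rel_def rle_def by (metis (mono_tags, lifting) fbk le_antisym mem_Collect_eq)
  ultimately have "{t \<in> carrier (A k). le (A k) t (R!k)} \<subset> {t \<in> carrier (A k). le (A k) t (R'!k)}"
    using sub[OF k(1)] by blast
  then have "card {t \<in> carrier (A k). le (A k) t (R!k)} < card {t \<in> carrier (A k). le (A k) t (R'!k)}"
    using k by (intro psubset_card_mono) (simp_all add: fin_car[OF fbk])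
  then show ?thesis unfolding rsize_def
    using k sub by (intro sum_strict_mono_ex1) (auto intro!: card_mono simp: fin_car[OF fbk])
qed

lemma rsize_le: assumes "is_rel m A R" "is_rel m A R'" "rle m A R R'"
  shows "rsize m A R \<le> rsize m A R'"
  using rsize_less[OF assms] by (cases "R = R'") auto

end


lemma ma_nal: "multi_algebra m A P \<Longrightarrow> \<forall>k<m. nalg (A k)" by (simp add: multi_algebra_def)

context
  fixes m :: nat and A :: "nat \<Rightarrow> 'a nalg" and P :: "nat \<Rightarrow> nat \<Rightarrow> 'a \<Rightarrow> 'a"
  assumes ma: "multi_algebra m A P"
begin

lemma nal: "\<forall>k<m. nalg (A k)" using ma by (simp add: multi_algebra_def)
lemma fbk': "k < m \<Longrightarrow> finite_boolean_algebra (A k)" using nal by (simp add: nalg_def)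

lemma P_car: "i < m \<Longrightarrow> j < m \<Longrightarrow> i \<noteq> j \<Longrightarrow> r \<in> carrier (A i) \<Longrightarrow> P i j r \<in> carrier (A j)"
  using ma by (simp add: multi_algebra_def)
lemma P_conv: "i < m \<Longrightarrow> j < m \<Longrightarrow> i \<noteq> j \<Longrightarrow> r \<in> carrier (A i) \<Longrightarrow> P i j (conv (A i) r) = conv (A j) (P i j r)"
  using ma by (simp add: multi_algebra_def)
lemma P_join: "i < m \<Longrightarrow> j < m \<Longrightarrow> i \<noteq> j \<Longrightarrow> r \<in> carrier (A i) \<Longrightarrow> r' \<in> carrier (A i) \<Longrightarrow>
   P i j (join (A i) r r') = join (A j) (P i j r) (P i j r')"
  using ma by (simp add: multi_algebra_def)
lemma P_mono: "i < m \<Longrightarrow> j < m \<Longrightarrow> i \<noteq> j \<Longrightarrow> r \<in> carrier (A i) \<Longrightarrow> r' \<in> carrier (A i) \<Longrightarrow>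
   le (A i) r r' \<Longrightarrow> le (A j) (P i j r) (P i j r')"
  unfolding le_def by (metis P_join)

lemma step_rel: assumes R: "is_rel m A R" and ij: "i < m" "j < m" "i \<noteq> j"
  shows "is_rel m A (proj_pair_step A P (i,j) R)" "rle m A (proj_pair_step A P (i,j) R) R"
  using R ij unfolding is_rel_def rle_def proj_pair_step_def
  by (auto simp: nth_list_update fbk' P_car meet_le1 le_refl)

lemma step_great: assumes R: "is_rel m A R" and ij: "i < m" "j < m" "i \<noteq> j"
  and Q: "is_rel m A Q" "proj_closed m A P Q" "rle m A Q R"
  shows "rle m A Q (proj_pair_step A P (i,j) R)"
proof -
  have "le (A j) (Q!j) (meet (A j) (R!j) (P i j (R!i)))"
  proof (rule meet_glb[OF fbk'[OF ij(2)]])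
    show "le (A j) (Q ! j) (P i j (R ! i))"
      using Q R ij P_mono[OF ij, of "Q!i" "R!i"] le_trans[OF fbk'[OF ij(2)], of "Q!j" "P i j (Q!i)" "P i j (R!i)"]
      unfolding is_rel_def rle_def proj_closed_def by (auto simp: P_car)
  qed (use Q R ij in \<open>auto simp: is_rel_def rle_def P_car\<close>)
  then show ?thesis using Q R ij unfolding rle_def proj_pair_step_def is_rel_def
    by (auto simp: nth_list_update)
qed

definition "vpairs = {(i,j). i < m \<and> j < m \<and> i \<noteq> j}"

lemma fold_rel: "set l \<subseteq> vpairs \<Longrightarrow> is_rel m A R \<Longrightarrow>
   is_rel m A (fold (proj_pair_step A P) l R) \<and> rle m A (fold (proj_pair_step A P) l R) R"
proof (induction l arbitrary: R)
  case Nil then show ?case using rle_refl[OF nal] by simp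
next
  case (Cons p l)
  obtain i j where p: "p = (i,j)" by force
  have ij: "i < m" "j < m" "i \<noteq> j" using Cons.prems p by (auto simp: vpairs_def)
  have s: "is_rel m A (proj_pair_step A P (i,j) R)" "rle m A (proj_pair_step A P (i,j) R) R"
    using step_rel[OF Cons.prems(2) ij] by auto
  then show ?case using Cons.IH[of "proj_pair_step A P (i,j) R"] Cons.prems p
    by (auto intro: rle_trans[OF nal] simp del: fold_simps)
qed

lemma fold_great: "set l \<subseteq> vpairs \<Longrightarrow> is_rel m A R \<Longrightarrow> is_rel m A Q \<Longrightarrow> proj_closed m A P Q \<Longrightarrow> rle m A Q R \<Longrightarrow>
   rle m A Q (fold (proj_pair_step A P) l R)"
proof (induction l arbitrary: R)
  case Nil then show ?case by simp
next
  case (Cons p l)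
  obtain i j where p: "p = (i,j)" by force
  have ij: "i < m" "j < m" "i \<noteq> j" using Cons.prems p by (auto simp: vpairs_def)
  show ?case using Cons.IH[of "proj_pair_step A P (i,j) R"] Cons.prems p step_rel[OF Cons.prems(2) ij]
      step_great[OF Cons.prems(2) ij Cons.prems(3-5)] by auto
qed

lemma fold_fix: "set l \<subseteq> vpairs \<Longrightarrow> is_rel m A R \<Longrightarrow> fold (proj_pair_step A P) l R = R \<Longrightarrow>
   \<forall>(i,j)\<in>set l. le (A j) (R!j) (P i j (R!i))"
proof (induction l arbitrary: R)
  case Nil then show ?case by simp
next
  case (Cons p l)
  obtain i j where p: "p = (i,j)" by force
  have ij: "i < m" "j < m" "i \<noteq> j" using Cons.prems p by (auto simp: vpairs_def)
  let ?R1 = "proj_pair_step A P (i,j) R"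
  have s: "is_rel m A ?R1" "rle m A ?R1 R" using step_rel[OF Cons.prems(2) ij] by auto
  have f: "fold (proj_pair_step A P) l ?R1 = R" using Cons.prems p by simp
  have "rle m A R ?R1" using fold_rel[of l ?R1] Cons.prems(1) s f by simp
  then have eq: "?R1 = R" using s Cons.prems(2) by (simp add: rle_antisym[OF nal])
  then have "meet (A j) (R!j) (P i j (R!i)) = R!j"
    unfolding proj_pair_step_def using Cons.prems(2) ij
    by (metis case_prod_conv is_rel_def nth_list_update_eq)
  then have "le (A j) (R!j) (P i j (R!i))"
    using Cons.prems(2) ij by (metis meet_eq_iff fbk' P_car is_rel_def)
  then show ?case using Cons.IH[of R] Cons.prems eq p f by auto
qed

lemma pl_set: "set [(i, j). i \<leftarrow> [0..<m], j \<leftarrow> [0..<m], i \<noteq> j] = vpairs"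
  by (auto simp: vpairs_def)

lemma round_props:
  assumes "is_rel m A R"
  shows "is_rel m A (proj_round m A P R)" "rle m A (proj_round m A P R) R"
    "\<And>Q. is_rel m A Q \<Longrightarrow> proj_closed m A P Q \<Longrightarrow> rle m A Q R \<Longrightarrow> rle m A Q (proj_round m A P R)"
    "proj_round m A P R = R \<Longrightarrow> proj_closed m A P R"
proof -
  note pl = pl_set[THEN equalityD1]
  show "is_rel m A (proj_round m A P R)" "rle m A (proj_round m A P R) R"
    using fold_rel[OF pl assms] unfolding proj_round_def by auto
  show "\<And>Q. is_rel m A Q \<Longrightarrow> proj_closed m A P Q \<Longrightarrow> rle m A Q R \<Longrightarrow> rle m A Q (proj_round m A P R)"
    using fold_great[OF pl assms] unfolding proj_round_def by auto
  show "proj_round m A P R = R \<Longrightarrow> proj_closed m A P R"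
    using fold_fix[OF pl assms] unfolding proj_round_def proj_closed_def pl_set vpairs_def by auto
qed

lemma pclos:
  assumes R: "is_rel m A R"
  shows "is_rel m A (proj_closure m A P R)" "rle m A (proj_closure m A P R) R"
    "proj_closed m A P (proj_closure m A P R)"
    "\<And>Q. is_rel m A Q \<Longrightarrow> proj_closed m A P Q \<Longrightarrow> rle m A Q R \<Longrightarrow> rle m A Q (proj_closure m A P R)"
proof -
  define I where "I = (\<lambda>T. is_rel m A T \<and> rle m A T R \<and> (\<forall>Q. is_rel m A Q \<and> proj_closed m A P Q \<and> rle m A Q R \<longrightarrow> rle m A Q T))"
  have I0: "I R" using R rle_refl[OF nal] by (auto simp: I_def)
  have step: "I (proj_round m A P T)" if IT: "I T" for T
  proof -
    have T: "is_rel m A T" "rle m A T R" using IT by (auto simp: I_def)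
    note rp = round_props[OF T(1)]
    have "rle m A (proj_round m A P T) R" using rle_trans[OF nal rp(1) T(1) R rp(2) T(2)] .
    moreover have "rle m A Q (proj_round m A P T)" if "is_rel m A Q" "proj_closed m A P Q" "rle m A Q R" for Q
      using rp(3)[OF that(1,2)] IT that by (auto simp: I_def)
    ultimately show ?thesis using rp(1) by (auto simp: I_def)
  qed
  have "\<exists>t. while_option (\<lambda>R. proj_round m A P R \<noteq> R) (proj_round m A P) R = Some t"
  proof (rule measure_while_option_Some[where f = "rsize m A" and P = I])
    fix T assume IT: "I T" and ne: "proj_round m A P T \<noteq> T"
    have T: "is_rel m A T" using IT by (auto simp: I_def)
    note rp = round_props[OF T]
    have "rsize m A (proj_round m A P T) < rsize m A T"
      using rsize_less[OF nal rp(1) T rp(2) ne] .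
    then show "I (proj_round m A P T) \<and> rsize m A (proj_round m A P T) < rsize m A T"
      using step[OF IT] by simp
  qed (rule I0)
  then obtain t where t: "while_option (\<lambda>R. proj_round m A P R \<noteq> R) (proj_round m A P) R = Some t" by blast
  have It: "I t" by (rule while_option_rule[OF _ t]) (use step I0 in auto)
  have "proj_round m A P t = t" using while_option_stop[OF t] by simp
  then have "proj_closed m A P t" using round_props(4) It by (auto simp: I_def)
  moreover have "proj_closure m A P R = t" using t by (simp add: proj_closure_def)
  ultimately show "is_rel m A (proj_closure m A P R)" "rle m A (proj_closure m A P R) R"
    "proj_closed m A P (proj_closure m A P R)"
    "\<And>Q. is_rel m A Q \<Longrightarrow> proj_closed m A P Q \<Longrightarrow> rle m A Q R \<Longrightarrow> rle m A Q (proj_closure m A P R)"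
    using It by (auto simp: I_def)
qed

lemma pclos_id: "is_rel m A R \<Longrightarrow> proj_closed m A P R \<Longrightarrow> proj_closure m A P R = R"
  using pclos[of R] rle_refl[OF nal] rle_antisym[OF nal] by meson

lemma pc_rconv: assumes Q: "is_rel m A Q" "proj_closed m A P Q" shows "proj_closed m A P (rconv m A Q)"
  unfolding proj_closed_def
proof (intro allI impI)
  fix i j assume ij: "i < m" "j < m" "i \<noteq> j"
  have c: "Q!i \<in> carrier (A i)" "Q!j \<in> carrier (A j)" using Q ij by (auto simp: is_rel_def)
  have "le (A j) (Q!j) (P i j (Q!i))" using Q ij by (auto simp: proj_closed_def)
  then have "le (A j) (conv (A j) (Q!j)) (conv (A j) (P i j (Q!i)))"
    using conv_mono[of "A j"] nal ij c P_car by blast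
  then show "le (A j) (rconv m A Q ! j) (P i j (rconv m A Q ! i))"
    using ij c by (simp add: P_conv)
qed

lemma pclos_rconv: assumes R: "is_rel m A R"
  shows "proj_closure m A P (rconv m A R) = rconv m A (proj_closure m A P R)"
proof -
  have Rc: "is_rel m A (rconv m A R)" using R nal by simp
  note a = pclos[OF R] and b = pclos[OF Rc]
  have 1: "rle m A (rconv m A (proj_closure m A P R)) (proj_closure m A P (rconv m A R))"
    using a R nal by (intro b(4)) (auto intro: pc_rconv rconv_mono[OF nal])
  have "rle m A (rconv m A (proj_closure m A P (rconv m A R))) (proj_closure m A P R)"
    using b Rc R nal rconv_mono[OF nal, of "rconv m A R" "proj_closure m A P (rconv m A R)"]
    by (intro a(4)) (auto intro: pc_rconv)
  then have 2: "rle m A (proj_closure m A P (rconv m A R)) (rconv m A (proj_closure m A P R))"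
    using rconv_mono[OF nal, of "proj_closure m A P R" "rconv m A (proj_closure m A P (rconv m A R))"] a b nal
    by simp
  show ?thesis using 1 2 a b nal rle_antisym[OF nal] by simp
qed

end


definition netok :: "nat \<Rightarrow> (nat \<Rightarrow> 'a nalg) \<Rightarrow> nat set \<Rightarrow> (nat \<Rightarrow> nat \<Rightarrow> 'a list) \<Rightarrow> bool" where
  "netok m A E N \<longleftrightarrow> (\<forall>x\<in>E. \<forall>y\<in>E. x \<noteq> y \<longrightarrow> is_rel m A (N x y) \<and> N y x = rconv m A (N x y))"
definition nle :: "nat \<Rightarrow> (nat \<Rightarrow> 'a nalg) \<Rightarrow> nat set \<Rightarrow> (nat \<Rightarrow> nat \<Rightarrow> 'a list) \<Rightarrow> (nat \<Rightarrow> nat \<Rightarrow> 'a list) \<Rightarrow> bool" where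
  "nle m A E K N \<longleftrightarrow> (\<forall>x\<in>E. \<forall>y\<in>E. x \<noteq> y \<longrightarrow> rle m A (K x y) (N x y))"
definition nrel :: "nat \<Rightarrow> (nat \<Rightarrow> 'a nalg) \<Rightarrow> nat set \<Rightarrow> (nat \<Rightarrow> nat \<Rightarrow> 'a list) \<Rightarrow> bool" where
  "nrel m A E K \<longleftrightarrow> (\<forall>x\<in>E. \<forall>y\<in>E. x \<noteq> y \<longrightarrow> is_rel m A (K x y))"
definition same_out :: "nat set \<Rightarrow> (nat \<Rightarrow> nat \<Rightarrow> 'a list) \<Rightarrow> (nat \<Rightarrow> nat \<Rightarrow> 'a list) \<Rightarrow> bool" where
  "same_out E K N \<longleftrightarrow> (\<forall>x y. \<not> (x \<in> E \<and> y \<in> E \<and> x \<noteq> y) \<longrightarrow> K x y = N x y)"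
definition "vtrip E = {(x,y,z). x \<in> E \<and> y \<in> E \<and> z \<in> E \<and> x \<noteq> y \<and> y \<noteq> z \<and> x \<noteq> z}"

definition nsize :: "nat \<Rightarrow> (nat \<Rightarrow> 'a nalg) \<Rightarrow> nat set \<Rightarrow> (nat \<Rightarrow> nat \<Rightarrow> 'a list) \<Rightarrow> nat" where
  "nsize m A E N = (\<Sum>p\<in>{(x,y). x \<in> E \<and> y \<in> E \<and> x \<noteq> y}. rsize m A (N (fst p) (snd p)))"

context
  fixes m :: nat and A :: "nat \<Rightarrow> 'a nalg"
  assumes nal: "\<forall>k<m. nalg (A k)"
begin

lemmas ops[simp] = is_rel_ops[OF nal]

lemma netok_rel: "netok m A E N \<Longrightarrow> nrel m A E N" unfolding netok_def nrel_def by blast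
lemma netok_relD: "netok m A E N \<Longrightarrow> a \<in> E \<Longrightarrow> b \<in> E \<Longrightarrow> a \<noteq> b \<Longrightarrow> is_rel m A (N a b)"
  unfolding netok_def by blast
lemma netok_symD: "netok m A E N \<Longrightarrow> a \<in> E \<Longrightarrow> b \<in> E \<Longrightarrow> a \<noteq> b \<Longrightarrow> N b a = rconv m A (N a b)"
  unfolding netok_def by blast
lemma nle_refl: "netok m A E N \<Longrightarrow> nle m A E N N"
  unfolding nle_def using netok_relD rle_refl[OF nal] by blast
lemma nle_trans: "netok m A E K \<Longrightarrow> netok m A E L \<Longrightarrow> netok m A E N \<Longrightarrow> nle m A E K L \<Longrightarrow> nle m A E L N \<Longrightarrow> nle m A E K N"
  unfolding nle_def using netok_relD rle_trans[OF nal] by metis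

lemma cstep_props:
  assumes N: "netok m A E N" and t: "(x,y,z) \<in> vtrip E"
  shows "netok m A E (comp_triple_step m A (x,y,z) N)" "nle m A E (comp_triple_step m A (x,y,z) N) N"
    "same_out E (comp_triple_step m A (x,y,z) N) N"
proof -
  define r where "r = rmeet m A (N x z) (rcomp m A (N x y) (N y z))"
  have d: "x \<in> E" "y \<in> E" "z \<in> E" "x \<noteq> y" "y \<noteq> z" "x \<noteq> z" using t by (auto simp: vtrip_def)
  have rel: "\<And>a b. a \<in> E \<Longrightarrow> b \<in> E \<Longrightarrow> a \<noteq> b \<Longrightarrow> is_rel m A (N a b)" by (rule netok_relD[OF N])
  have sym: "\<And>a b. a \<in> E \<Longrightarrow> b \<in> E \<Longrightarrow> a \<noteq> b \<Longrightarrow> N b a = rconv m A (N a b)" by (rule netok_symD[OF N])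
  have rr: "is_rel m A r" unfolding r_def using d rel nal by simp
  have st: "comp_triple_step m A (x,y,z) N = (\<lambda>a b. if a = x \<and> b = z then r else if a = z \<and> b = x then rconv m A r else N a b)"
    unfolding r_def comp_triple_step_def Let_def by simp
  have rle1: "rle m A r (N x z)" unfolding r_def using rel d by (intro rmeet_le1[OF nal]) simp_all
  have rrc: "is_rel m A (rconv m A r)" using rr nal by simp
  show "netok m A E (comp_triple_step m A (x,y,z) N)" unfolding st netok_def
  proof (intro ballI impI conjI)
    fix a b assume ab: "a \<in> E" "b \<in> E" "a \<noteq> b"
    show "is_rel m A (if a = x \<and> b = z then r else if a = z \<and> b = x then rconv m A r else N a b)"
      using rr rrc rel[OF ab] by auto
    show "(if b = x \<and> a = z then r else if b = z \<and> a = x then rconv m A r else N b a) =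
          rconv m A (if a = x \<and> b = z then r else if a = z \<and> b = x then rconv m A r else N a b)"
    proof (cases "a = x \<and> b = z")
      case True then show ?thesis using d by simp
    next
      case F1: False show ?thesis
      proof (cases "a = z \<and> b = x")
        case True then show ?thesis using d rr nal by simp
      next
        case False
        have c1: "\<not> (b = x \<and> a = z)" "\<not> (b = z \<and> a = x)" using F1 False by blast+
        have e1: "(if b = x \<and> a = z then r else if b = z \<and> a = x then rconv m A r else N b a) = N b a"
          unfolding if_not_P[OF c1(1)] if_not_P[OF c1(2)] ..
        have e2: "(if a = x \<and> b = z then r else if a = z \<and> b = x then rconv m A r else N a b) = N a b"
          unfolding if_not_P[OF F1] if_not_P[OF False] ..
        show ?thesis unfolding e1 e2 by (rule sym[OF ab])
      qed
    qed
  qed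
  have rle2: "rle m A (rconv m A r) (N z x)" using rconv_mono[OF nal rel[of x z] rr rle1] sym[of x z] d by simp
  show "nle m A E (comp_triple_step m A (x,y,z) N) N" unfolding st nle_def
  proof (intro ballI impI)
    fix a b assume ab: "a \<in> E" "b \<in> E" "a \<noteq> b"
    show "rle m A (if a = x \<and> b = z then r else if a = z \<and> b = x then rconv m A r else N a b) (N a b)"
    proof (cases "a = x \<and> b = z")
      case True then show ?thesis using rle1 by simp
    next
      case F1: False show ?thesis
      proof (cases "a = z \<and> b = x")
        case True then show ?thesis using rle2 F1 by simp
      next
        case False show ?thesis unfolding if_not_P[OF F1] if_not_P[OF False]
          by (rule rle_refl[OF nal rel[OF ab]])
      qed
    qed
  qed
  show "same_out E (comp_triple_step m A (x,y,z) N) N" unfolding st same_out_def using d by auto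
qed

lemma cstep_great:
  assumes N: "netok m A E N" and t: "(x,y,z) \<in> vtrip E" and K: "nrel m A E K" "comp_closed m A E K" "nle m A E K N"
  shows "nle m A E K (comp_triple_step m A (x,y,z) N)"
proof -
  define r where "r = rmeet m A (N x z) (rcomp m A (N x y) (N y z))"
  have d: "x \<in> E" "y \<in> E" "z \<in> E" "x \<noteq> y" "y \<noteq> z" "x \<noteq> z" using t by (auto simp: vtrip_def)
  have rel: "\<And>a b. a \<in> E \<Longrightarrow> b \<in> E \<Longrightarrow> a \<noteq> b \<Longrightarrow> is_rel m A (N a b)" by (rule netok_relD[OF N])
  have sym: "\<And>a b. a \<in> E \<Longrightarrow> b \<in> E \<Longrightarrow> a \<noteq> b \<Longrightarrow> N b a = rconv m A (N a b)" by (rule netok_symD[OF N])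
  have krel: "\<And>a b. a \<in> E \<Longrightarrow> b \<in> E \<Longrightarrow> a \<noteq> b \<Longrightarrow> is_rel m A (K a b)" using K by (auto simp: nrel_def)
  have kle: "\<And>a b. a \<in> E \<Longrightarrow> b \<in> E \<Longrightarrow> a \<noteq> b \<Longrightarrow> rle m A (K a b) (N a b)" using K by (auto simp: nle_def)
  have kc: "\<And>a b c. a \<in> E \<Longrightarrow> b \<in> E \<Longrightarrow> c \<in> E \<Longrightarrow> a \<noteq> b \<Longrightarrow> b \<noteq> c \<Longrightarrow> a \<noteq> c \<Longrightarrow>
      rle m A (K a c) (rcomp m A (K a b) (K b c))" using K by (auto simp: comp_closed_def)
  have st: "comp_triple_step m A (x,y,z) N = (\<lambda>a b. if a = x \<and> b = z then r else if a = z \<and> b = x then rconv m A r else N a b)"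
    unfolding r_def comp_triple_step_def Let_def by simp
  have gen: "rle m A (K a c) (rmeet m A (N a c) (rcomp m A (N a b) (N b c)))"
    if "a \<in> E" "b \<in> E" "c \<in> E" "a \<noteq> b" "b \<noteq> c" "a \<noteq> c" for a b c
  proof (rule rmeet_glb[OF nal])
    show "rle m A (K a c) (rcomp m A (N a b) (N b c))"
      using rle_trans[OF nal, OF krel[of a c] _ _ kc[OF that] rcomp_mono[OF nal, OF rel[of a b] rel[of b c] krel[of a b] krel[of b c] kle[of a b] kle[of b c]]]
        that nal rel krel by simp
  qed (use that rel krel kle nal in auto)
  have rc: "rconv m A r = rmeet m A (N z x) (rcomp m A (N z y) (N y x))"
  proof -
    have "rconv m A r = rmeet m A (rconv m A (N x z)) (rcomp m A (rconv m A (N y z)) (rconv m A (N x y)))"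
      unfolding r_def using d rel by (simp add: rconv_rmeet[OF nal] rconv_rcomp[OF nal])
    also have "\<dots> = rmeet m A (N z x) (rcomp m A (N z y) (N y x))"
      using sym[of x z] sym[of y z] sym[of x y] d by simp
    finally show ?thesis .
  qed
  have g1: "rle m A (K x z) r" unfolding r_def using gen[of x y z] d by simp
  have g2: "rle m A (K z x) (rconv m A r)" unfolding rc using gen[of z y x] d by simp
  show ?thesis unfolding st nle_def
  proof (intro ballI impI)
    fix a b assume ab: "a \<in> E" "b \<in> E" "a \<noteq> b"
    show "rle m A (K a b) (if a = x \<and> b = z then r else if a = z \<and> b = x then rconv m A r else N a b)"
    proof (cases "a = x \<and> b = z")
      case True then show ?thesis using g1 by simp
    next
      case F1: False show ?thesis
      proof (cases "a = z \<and> b = x")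
        case True then show ?thesis using g2 F1 by simp
      next
        case False show ?thesis unfolding if_not_P[OF F1] if_not_P[OF False]
          by (rule kle[OF ab])
      qed
    qed
  qed
qed

lemma cfold_props: "set l \<subseteq> vtrip E \<Longrightarrow> netok m A E N \<Longrightarrow>
   netok m A E (fold (comp_triple_step m A) l N) \<and> nle m A E (fold (comp_triple_step m A) l N) N \<and>
   same_out E (fold (comp_triple_step m A) l N) N"
proof (induction l arbitrary: N)
  case Nil then show ?case using nle_refl by (auto simp: same_out_def)
next
  case (Cons t l)
  obtain x y z where t: "t = (x,y,z)" by (cases t) auto
  have tv: "(x,y,z) \<in> vtrip E" using Cons.prems t by auto
  note s = cstep_props[OF Cons.prems(2) tv]
  have ih: "netok m A E (fold (comp_triple_step m A) l (comp_triple_step m A (x,y,z) N))"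
    "nle m A E (fold (comp_triple_step m A) l (comp_triple_step m A (x,y,z) N)) (comp_triple_step m A (x,y,z) N)"
    "same_out E (fold (comp_triple_step m A) l (comp_triple_step m A (x,y,z) N)) (comp_triple_step m A (x,y,z) N)"
    using Cons.IH[OF _ s(1)] Cons.prems by auto
  have "nle m A E (fold (comp_triple_step m A) l (comp_triple_step m A (x,y,z) N)) N"
    using ih(1,2) s(1,2) Cons.prems(2) by (meson nle_trans)
  moreover have "same_out E (fold (comp_triple_step m A) l (comp_triple_step m A (x,y,z) N)) N"
    using ih(3) s(3) by (simp add: same_out_def)
  ultimately show ?case using ih t by simp
qed

lemma cfold_great: "set l \<subseteq> vtrip E \<Longrightarrow> netok m A E N \<Longrightarrow> nrel m A E K \<Longrightarrow> comp_closed m A E K \<Longrightarrow> nle m A E K N \<Longrightarrow>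
   nle m A E K (fold (comp_triple_step m A) l N)"
proof (induction l arbitrary: N)
  case Nil then show ?case by simp
next
  case (Cons t l)
  obtain x y z where t: "t = (x,y,z)" by (cases t) auto
  have tv: "(x,y,z) \<in> vtrip E" using Cons.prems t by auto
  show ?case using Cons.IH[OF _ cstep_props(1)[OF Cons.prems(2) tv] Cons.prems(3,4) cstep_great[OF Cons.prems(2) tv Cons.prems(3-5)]]
    Cons.prems(1) t by simp
qed

lemma net_eq: "netok m A E K \<Longrightarrow> netok m A E N \<Longrightarrow> nle m A E K N \<Longrightarrow> nle m A E N K \<Longrightarrow> same_out E K N \<Longrightarrow> K = N"
  unfolding nle_def same_out_def
  by (intro ext) (metis rle_antisym[OF nal] netok_relD)

lemma cfold_fix: "set l \<subseteq> vtrip E \<Longrightarrow> netok m A E N \<Longrightarrow> fold (comp_triple_step m A) l N = N \<Longrightarrow>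
   \<forall>(x,y,z)\<in>set l. rle m A (N x z) (rcomp m A (N x y) (N y z))"
proof (induction l arbitrary: N)
  case Nil then show ?case by simp
next
  case (Cons t l)
  obtain x y z where t: "t = (x,y,z)" by (cases t) auto
  have tv: "(x,y,z) \<in> vtrip E" using Cons.prems t by auto
  let ?N1 = "comp_triple_step m A (x,y,z) N"
  note s = cstep_props[OF Cons.prems(2) tv]
  have f: "fold (comp_triple_step m A) l ?N1 = N" using Cons.prems t by simp
  have "nle m A E N ?N1" using cfold_props[OF _ s(1), of l] Cons.prems(1) f by simp
  then have eq: "?N1 = N" using net_eq[OF s(1) Cons.prems(2) s(2) _ s(3)] by simp
  have d: "x \<in> E" "y \<in> E" "z \<in> E" "x \<noteq> y" "y \<noteq> z" "x \<noteq> z" using tv by (auto simp: vtrip_def)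
  have rel: "\<And>a b. a \<in> E \<Longrightarrow> b \<in> E \<Longrightarrow> a \<noteq> b \<Longrightarrow> is_rel m A (N a b)" by (rule netok_relD[OF Cons.prems(2)])
  have "rmeet m A (N x z) (rcomp m A (N x y) (N y z)) = N x z"
    using fun_cong[OF fun_cong[OF eq, of x], of z] by (simp add: comp_triple_step_def Let_def)
  then have "rle m A (N x z) (rcomp m A (N x y) (N y z))"
    using rmeet_eq_iff[OF nal] rel d nal by simp
  then show ?case using Cons.IH[of N] Cons.prems eq t f by auto
qed

lemma tl_set: "finite E \<Longrightarrow> set [(x, y, z). x \<leftarrow> sorted_list_of_set E, y \<leftarrow> sorted_list_of_set E,
                   z \<leftarrow> sorted_list_of_set E, x \<noteq> y \<and> y \<noteq> z \<and> x \<noteq> z] = vtrip E"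
  by (auto simp: vtrip_def)

lemma nsize_less: assumes fin: "finite E" and K: "netok m A E K" and N: "netok m A E N"
  and le: "nle m A E K N" and so: "same_out E K N" and ne: "K \<noteq> N"
  shows "nsize m A E K < nsize m A E N"
proof -
  obtain a b where ab: "K a b \<noteq> N a b" using ne by blast
  then have abE: "a \<in> E" "b \<in> E" "a \<noteq> b" using so by (auto simp: same_out_def)
  have finP: "finite {(x,y). x \<in> E \<and> y \<in> E \<and> x \<noteq> y}"
    by (rule finite_subset[of _ "E \<times> E"]) (use fin in auto)
  show ?thesis unfolding nsize_def
  proof (rule sum_strict_mono_ex1[OF finP])
    show "\<forall>p\<in>{(x,y). x \<in> E \<and> y \<in> E \<and> x \<noteq> y}. rsize m A (K (fst p) (snd p)) \<le> rsize m A (N (fst p) (snd p))"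
      using K N le by (auto simp: nle_def intro!: rsize_le[OF nal] netok_relD)
    show "\<exists>p\<in>{(x,y). x \<in> E \<and> y \<in> E \<and> x \<noteq> y}. rsize m A (K (fst p) (snd p)) < rsize m A (N (fst p) (snd p))"
      using K N le abE ab by (intro bexI[of _ "(a,b)"]) (auto simp: nle_def intro!: rsize_less[OF nal] netok_relD)
  qed
qed

lemma cclos:
  assumes fin: "finite E" and N: "netok m A E N"
  shows "netok m A E (comp_closure m A E N)" "nle m A E (comp_closure m A E N) N"
    "comp_closed m A E (comp_closure m A E N)"
    "\<And>K. nrel m A E K \<Longrightarrow> comp_closed m A E K \<Longrightarrow> nle m A E K N \<Longrightarrow> nle m A E K (comp_closure m A E N)"
proof -
  have tl: "set [(x, y, z). x \<leftarrow> sorted_list_of_set E, y \<leftarrow> sorted_list_of_set E,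
                   z \<leftarrow> sorted_list_of_set E, x \<noteq> y \<and> y \<noteq> z \<and> x \<noteq> z] \<subseteq> vtrip E"
    using tl_set[OF fin] by simp
  note rp = cfold_props[OF tl, folded comp_round_def] and rg = cfold_great[OF tl, folded comp_round_def]
    and rf = cfold_fix[OF tl, folded comp_round_def]
  define I where "I = (\<lambda>T. netok m A E T \<and> nle m A E T N \<and>
     (\<forall>K. nrel m A E K \<and> comp_closed m A E K \<and> nle m A E K N \<longrightarrow> nle m A E K T))"
  have I0: "I N" using N nle_refl by (auto simp: I_def)
  have step: "I (comp_round m A E T)" if IT: "I T" for T
  proof -
    have T: "netok m A E T" "nle m A E T N" using IT by (auto simp: I_def)
    note r = rp[OF T(1)]
    have "nle m A E (comp_round m A E T) N"
      using r T N by (meson nle_trans)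
    moreover have "nle m A E K (comp_round m A E T)" if "nrel m A E K" "comp_closed m A E K" "nle m A E K N" for K
      using rg[OF T(1) that(1,2)] IT that by (auto simp: I_def)
    ultimately show ?thesis using r by (auto simp: I_def)
  qed
  have "\<exists>t. while_option (\<lambda>N. comp_round m A E N \<noteq> N) (comp_round m A E) N = Some t"
  proof (rule measure_while_option_Some[where f = "nsize m A E" and P = I])
    fix T assume IT: "I T" and ne: "comp_round m A E T \<noteq> T"
    have T: "netok m A E T" using IT by (auto simp: I_def)
    note r = rp[OF T]
    have "nsize m A E (comp_round m A E T) < nsize m A E T"
      using nsize_less[OF fin _ T _ _ ne] r by blast
    then show "I (comp_round m A E T) \<and> nsize m A E (comp_round m A E T) < nsize m A E T"
      using step[OF IT] by simp
  qed (rule I0)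
  then obtain t where t: "while_option (\<lambda>N. comp_round m A E N \<noteq> N) (comp_round m A E) N = Some t" by blast
  have It: "I t" by (rule while_option_rule[OF _ t]) (use step I0 in auto)
  have "comp_round m A E t = t" using while_option_stop[OF t] by simp
  then have "comp_closed m A E t" using rf[of t] It tl_set[OF fin] unfolding comp_closed_def vtrip_def I_def
    by fastforce
  moreover have "comp_closure m A E N = t" using t by (simp add: comp_closure_def)
  ultimately show "netok m A E (comp_closure m A E N)" "nle m A E (comp_closure m A E N) N"
    "comp_closed m A E (comp_closure m A E N)"
    "\<And>K. nrel m A E K \<Longrightarrow> comp_closed m A E K \<Longrightarrow> nle m A E K N \<Longrightarrow> nle m A E K (comp_closure m A E N)"
    using It by (auto simp: I_def)
qed

end


lemma all2: "(\<forall>k<(2::nat). Q k) \<longleftrightarrow> Q 0 \<and> Q 1"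
  using less_2_cases by fastforce
lemma ex2: "(\<exists>k<(2::nat). Q k) \<longleftrightarrow> Q 0 \<or> Q 1"
  using less_2_cases by (metis One_nat_def less_2_cases_iff)
lemma upt2: "[0..<2] = [0, 1::nat]" by (simp add: numeral_2_eq_2)

lemma bis_alg[simp]: "bislice_alg A i j 0 = A i" "bislice_alg A i j (Suc 0) = A j"
  by (simp_all add: bislice_alg_def)
lemma bis_alg1[simp]: "bislice_alg A i j 1 = A j" by (simp add: bislice_alg_def)
lemma bis_proj1[simp]: "bislice_proj P i j 1 b = P j i" by (simp add: bislice_proj_def)
lemma bis_proj[simp]: "bislice_proj P i j 0 b = P i j" "bislice_proj P i j (Suc 0) b = P j i"
  by (simp_all add: bislice_proj_def)

lemma bis_ma: assumes ma: "multi_algebra m A P" and ij: "i < m" "j < m" "i \<noteq> j"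
  shows "multi_algebra 2 (bislice_alg A i j) (bislice_proj P i j)"
  unfolding multi_algebra_def all2
  using ma ij unfolding multi_algebra_def by simp

lemma bis_nal: assumes ma: "multi_algebra m A P" and ij: "i < m" "j < m" "i \<noteq> j"
  shows "\<forall>k<2. nalg (bislice_alg A i j k)"
  using ma_nal[OF bis_ma[OF ma ij]] .

lemma bis_rel: "is_rel 2 (bislice_alg A i j) [u, v] \<longleftrightarrow> u \<in> carrier (A i) \<and> v \<in> carrier (A j)"
  by (simp add: is_rel_def all2)
lemma bis_rel_nth: assumes "is_rel 2 (bislice_alg A i j) R"
  shows "R!0 \<in> carrier (A i)" "R!1 \<in> carrier (A j)" "length R = 2"
proof -
  have h: "\<forall>k<2. R!k \<in> carrier (bislice_alg A i j k)" using assms by (simp add: is_rel_def)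
  show "R!0 \<in> carrier (A i)" using h[rule_format, of 0] by simp
  show "R!1 \<in> carrier (A j)" using h[rule_format, of 1] by simp
  show "length R = 2" using assms by (simp add: is_rel_def)
qed
lemma bis_rle_nth: assumes "rle 2 (bislice_alg A i j) R R'"
  shows "le (A i) (R!0) (R'!0)" "le (A j) (R!1) (R'!1)"
proof -
  have h: "\<forall>k<2. le (bislice_alg A i j k) (R!k) (R'!k)" using assms by (simp add: rle_def)
  show "le (A i) (R!0) (R'!0)" using h[rule_format, of 0] by simp
  show "le (A j) (R!1) (R'!1)" using h[rule_format, of 1] by simp
qed
lemma bis_rconv: "rconv 2 (bislice_alg A i j) [u, v] = [conv (A i) u, conv (A j) v]"
  by (simp add: rconv_def upt2)
lemma bis_rcomp: "rcomp 2 (bislice_alg A i j) [u, v] [u', v'] = [comp (A i) u u', comp (A j) v v']"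
  by (simp add: rcomp_def upt2)
lemma bis_rle: "rle 2 (bislice_alg A i j) [u, v] [u', v'] \<longleftrightarrow> le (A i) u u' \<and> le (A j) v v'"
  by (simp add: rle_def all2)
lemma bis_pc: "proj_closed 2 (bislice_alg A i j) (bislice_proj P i j) [u, v] \<longleftrightarrow>
   le (A j) v (P i j u) \<and> le (A i) u (P j i v)"
  by (auto simp: proj_closed_def all2)



lemma key:
  assumes ma: "multi_algebra m A P"
  and hyp: "\<forall>i<m. \<forall>j<m. i \<noteq> j \<longrightarrow>
           (\<forall>E N. card E = 3 \<and>
              network_over 2 (bislice_alg A i j) (bislice_set S i j) E N \<longrightarrow>
              dissociable_net 2 (bislice_alg A i j) (bislice_proj P i j) E N)"
  and E3: "E3 = {x,y,z}" "x \<noteq> y" "y \<noteq> z" "x \<noteq> z"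
  and M: "netok m A E3 M" "\<forall>a\<in>E3. \<forall>b\<in>E3. a \<noteq> b \<longrightarrow> M a b \<in> S \<and> proj_closed m A P (M a b)"
  and K: "nrel m A E3 K" "comp_closed m A E3 K" "nle m A E3 K M" "\<not> triv_inconsistent m A E3 K"
  shows "proj_closed m A P (comp_closure m A E3 M x z)"
  unfolding proj_closed_def
proof (intro allI impI)
  fix i j assume ij: "i < m" "j < m" "i \<noteq> j"
  have nal: "\<forall>k<m. nalg (A k)" using ma_nal[OF ma] .
  define A' where "A' = bislice_alg A i j"
  define P' where "P' = bislice_proj P i j"
  have ma2: "multi_algebra 2 A' P'" unfolding A'_def P'_def by (rule bis_ma[OF ma ij])
  have nal2: "\<forall>k<2. nalg (A' k)" using ma_nal[OF ma2] .
  have A'0: "A' 0 = A i" and A'1: "A' (Suc 0) = A j" by (simp_all add: A'_def)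
  have fin: "finite E3" using E3 by simp
  define c where "c = comp_closure m A E3 M"
  define T where "T = (\<lambda>a b. [M a b ! i, M a b ! j])"
  define T1 where "T1 = (\<lambda>a b. proj_closure 2 A' P' (T a b))"
  define T' where "T' = comp_closure 2 A' E3 T1"
  have Mrel: "\<And>a b. a \<in> E3 \<Longrightarrow> b \<in> E3 \<Longrightarrow> a \<noteq> b \<Longrightarrow> is_rel m A (M a b)" by (rule netok_relD[OF nal M(1)])
  have Msym: "\<And>a b. a \<in> E3 \<Longrightarrow> b \<in> E3 \<Longrightarrow> a \<noteq> b \<Longrightarrow> M b a = rconv m A (M a b)" by (rule netok_symD[OF nal M(1)])
  have Trel: "is_rel 2 A' (T a b)" if "a \<in> E3" "b \<in> E3" "a \<noteq> b" for a b
  proof -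
    have "M a b ! i \<in> carrier (A i)" "M a b ! j \<in> carrier (A j)"
      using Mrel[OF that] ij unfolding is_rel_def by blast+
    then show ?thesis unfolding T_def A'_def bis_rel by blast
  qed
  have Tsym: "T b a = rconv 2 A' (T a b)" if "a \<in> E3" "b \<in> E3" "a \<noteq> b" for a b
  proof -
    have "T b a = [rconv m A (M a b) ! i, rconv m A (M a b) ! j]" unfolding T_def Msym[OF that] ..
    also have "\<dots> = [conv (A i) (M a b ! i), conv (A j) (M a b ! j)]" using ij by simp
    also have "\<dots> = rconv 2 A' (T a b)" unfolding T_def A'_def bis_rconv ..
    finally show ?thesis .
  qed
  have Tpc: "proj_closed 2 A' P' (T a b)" if "a \<in> E3" "b \<in> E3" "a \<noteq> b" for a b
  proof -
    have "proj_closed m A P (M a b)" using M(2) that by blast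
    then have "le (A j) (M a b ! j) (P i j (M a b ! i))" "le (A i) (M a b ! i) (P j i (M a b ! j))"
      unfolding proj_closed_def using ij by blast+
    then show ?thesis unfolding T_def A'_def P'_def bis_pc by blast
  qed
  have T1eq: "T1 a b = T a b" if "a \<in> E3" "b \<in> E3" "a \<noteq> b" for a b
    unfolding T1_def using pclos_id[OF ma2 Trel[OF that] Tpc[OF that]] .
  have netT: "network_over 2 A' (bislice_set S i j) E3 T"
    unfolding network_over_def bislice_set_def
  proof (intro conjI ballI impI)
    fix a b assume ab: "a \<in> E3" "b \<in> E3" "a \<noteq> b"
    show "T a b \<in> (\<lambda>R. [R ! i, R ! j]) ` S" using M(2) ab unfolding T_def by blast
    show "T b a = rconv 2 A' (T a b)" by (rule Tsym[OF ab])
  qed (rule fin)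
  have card: "card E3 = 3" using E3 by simp
  have dn: "dissociable_net 2 A' P' E3 T" using hyp ij netT card unfolding A'_def P'_def by blast
  have T1ok: "netok 2 A' E3 T1" unfolding netok_def
  proof (intro ballI impI conjI)
    fix a b assume ab: "a \<in> E3" "b \<in> E3" "a \<noteq> b"
    show "is_rel 2 A' (T1 a b)" using T1eq[OF ab] Trel[OF ab] by simp
    show "T1 b a = rconv 2 A' (T1 a b)"
      using T1eq[OF ab] T1eq[of b a] ab Tsym[OF ab] by simp
  qed
  note cl = cclos[OF nal fin M(1), folded c_def]
  note cl2 = cclos[OF nal2 fin T1ok, folded T'_def]
  have crel: "\<And>a b. a \<in> E3 \<Longrightarrow> b \<in> E3 \<Longrightarrow> a \<noteq> b \<Longrightarrow> is_rel m A (c a b)" by (rule netok_relD[OF nal cl(1)])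
  have T'rel: "\<And>a b. a \<in> E3 \<Longrightarrow> b \<in> E3 \<Longrightarrow> a \<noteq> b \<Longrightarrow> is_rel 2 A' (T' a b)" by (rule netok_relD[OF nal2 cl2(1)])
  have T'len: "length (T' a b) = 2" if "a \<in> E3" "b \<in> E3" "a \<noteq> b" for a b
    using T'rel[OF that] by (simp add: is_rel_def)
  have cle: "rle m A (c a b) (M a b)" if "a \<in> E3" "b \<in> E3" "a \<noteq> b" for a b
    using cl(2) that by (simp add: nle_def)
  have T'le: "rle 2 A' (T' a b) (T a b)" if "a \<in> E3" "b \<in> E3" "a \<noteq> b" for a b
    using cl2(2) that T1eq[OF that] unfolding nle_def by metis
  define K1 where "K1 = (\<lambda>a b. [c a b ! i, c a b ! j])"
  have K1le: "nle 2 A' E3 K1 T'"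
  proof (rule cl2(4))
    show "nrel 2 A' E3 K1" unfolding nrel_def K1_def A'_def bis_rel
      using crel ij by (simp add: is_rel_def)
    show "comp_closed 2 A' E3 K1" unfolding comp_closed_def K1_def A'_def bis_rcomp bis_rle
      using cl(3) ij unfolding comp_closed_def rle_def by simp
    show "nle 2 A' E3 K1 T1" unfolding nle_def
    proof (intro ballI impI)
      fix a b assume ab: "a \<in> E3" "b \<in> E3" "a \<noteq> b"
      show "rle 2 A' (K1 a b) (T1 a b)" unfolding T1eq[OF ab] K1_def T_def A'_def bis_rle
        using cle[OF ab] ij unfolding rle_def by simp
    qed
  qed
  define K2 where "K2 = (\<lambda>a b. (c a b)[i := T' a b ! 0, j := T' a b ! 1])"
  have K2nth: "K2 a b ! k = (if k = j then T' a b ! 1 else if k = i then T' a b ! 0 else c a b ! k)"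
    if "a \<in> E3" "b \<in> E3" "a \<noteq> b" "k < m" for a b k
    using crel[OF that(1-3)] that(4) ij unfolding K2_def by (auto simp: is_rel_def nth_list_update)
  have K2le: "nle m A E3 K2 c"
  proof (rule cl(4))
    show "nrel m A E3 K2" unfolding nrel_def
    proof (intro ballI impI)
      fix a b assume ab: "a \<in> E3" "b \<in> E3" "a \<noteq> b"
      have "T' a b ! 0 \<in> carrier (A i)" "T' a b ! 1 \<in> carrier (A j)"
        using bis_rel_nth[OF T'rel[OF ab, unfolded A'_def]] by simp_all
      then show "is_rel m A (K2 a b)" using crel[OF ab] ij unfolding K2_def is_rel_def
        by (auto simp: nth_list_update)
    qed
    show "comp_closed m A E3 K2" unfolding comp_closed_def
    proof (intro ballI impI)
      fix a b d assume ab: "a \<in> E3" "b \<in> E3" "d \<in> E3" "a \<noteq> b \<and> b \<noteq> d \<and> a \<noteq> d"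
      have t: "rle 2 A' (T' a d) (rcomp 2 A' (T' a b) (T' b d))" using cl2(3) ab unfolding comp_closed_def by blast
      have t0: "le (A i) (T' a d ! 0) (comp (A i) (T' a b ! 0) (T' b d ! 0))"
        using bis_rle_nth(1)[OF t[unfolded A'_def]] by simp
      have t1: "le (A j) (T' a d ! 1) (comp (A j) (T' a b ! 1) (T' b d ! 1))"
        using bis_rle_nth(2)[OF t[unfolded A'_def]] by simp
      have cc: "rle m A (c a d) (rcomp m A (c a b) (c b d))" using cl(3) ab unfolding comp_closed_def by blast
      show "rle m A (K2 a d) (rcomp m A (K2 a b) (K2 b d))" unfolding rle_def
      proof (intro allI impI)
        fix k assume k: "k < m"
        show "le (A k) (K2 a d ! k) (rcomp m A (K2 a b) (K2 b d) ! k)"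
          using t0 t1 cc k ab unfolding rle_def by (simp add: K2nth)
      qed
    qed
    show "nle m A E3 K2 M" unfolding nle_def
    proof (intro ballI impI)
      fix a b assume ab: "a \<in> E3" "b \<in> E3" "a \<noteq> b"
      have t: "rle 2 A' (T' a b) (T a b)" by (rule T'le[OF ab])
      have t0: "le (A i) (T' a b ! 0) (M a b ! i)" using bis_rle_nth(1)[OF t[unfolded A'_def T_def]] by simp
      have t1: "le (A j) (T' a b ! 1) (M a b ! j)" using bis_rle_nth(2)[OF t[unfolded A'_def T_def]] by simp
      have cc: "rle m A (c a b) (M a b)" by (rule cle[OF ab])
      show "rle m A (K2 a b) (M a b)" unfolding rle_def
      proof (intro allI impI)
        fix k assume k: "k < m"
        show "le (A k) (K2 a b ! k) (M a b ! k)"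
          using t0 t1 cc k ab unfolding rle_def by (simp add: K2nth)
      qed
    qed
  qed
  have eq0: "T' a b ! 0 = c a b ! i" and eq1: "T' a b ! 1 = c a b ! j" if ab: "a \<in> E3" "b \<in> E3" "a \<noteq> b" for a b
  proof -
    have r1: "rle 2 A' (K1 a b) (T' a b)" using K1le ab by (simp add: nle_def)
    have r2: "rle m A (K2 a b) (c a b)" using K2le ab by (simp add: nle_def)
    have ci: "c a b ! i \<in> carrier (A i)" "c a b ! j \<in> carrier (A j)" using crel[OF ab] ij by (auto simp: is_rel_def)
    have ti: "T' a b ! 0 \<in> carrier (A i)" "T' a b ! 1 \<in> carrier (A j)"
      using bis_rel_nth[OF T'rel[OF ab, unfolded A'_def]] by simp_all
    have a1: "le (A i) (c a b ! i) (T' a b ! 0)" "le (A j) (c a b ! j) (T' a b ! 1)"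
      using bis_rle_nth[OF r1[unfolded A'_def K1_def]] by simp_all
    have a2: "le (A i) (T' a b ! 0) (c a b ! i)" "le (A j) (T' a b ! 1) (c a b ! j)"
      using r2 ij unfolding rle_def by (auto simp: K2nth[OF ab])
    show "T' a b ! 0 = c a b ! i" using le_antisym[OF nalg_fba, of "A i"] nal ij ci ti a1 a2 by metis
    show "T' a b ! 1 = c a b ! j" using le_antisym[OF nalg_fba, of "A j"] nal ij ci ti a1 a2 by metis
  qed
  have Kc: "nle m A E3 K c" by (rule cl(4)[OF K(1-3)])
  have xzE: "x \<in> E3" "z \<in> E3" "x \<noteq> z" using E3 by auto
  from dn have "alg_consistent 2 A' P' E3 T' \<or> triv_inconsistent 2 A' E3 T'"
    unfolding dissociable_net_def Let_def T'_def T1_def by simp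
  then show "le (A j) (comp_closure m A E3 M x z ! j) (P i j (comp_closure m A E3 M x z ! i))"
  proof
    assume "alg_consistent 2 A' P' E3 T'"
    then have "proj_closed 2 A' P' (T' x z)" using xzE unfolding alg_consistent_def net_proj_closed_def by blast
    then have "le (A' 1) (T' x z ! 1) (P' 0 1 (T' x z ! 0))" unfolding proj_closed_def by auto
    then show ?thesis using eq0[OF xzE] eq1[OF xzE] unfolding c_def A'_def P'_def by simp
  next
    assume "triv_inconsistent 2 A' E3 T'"
    then obtain a b k where ab: "a \<in> E3" "b \<in> E3" "a \<noteq> b" and k: "k < 2" and kb: "T' a b ! k = bot (A' k)"
      unfolding triv_inconsistent_def by blast
    obtain k' where k': "k' < m" "c a b ! k' = bot (A k')"
      using k kb eq0[OF ab] eq1[OF ab] ij less_2_cases[OF k] by (auto simp: A'_def)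
    have "rle m A (K a b) (c a b)" using Kc ab by (simp add: nle_def)
    then have "K a b ! k' = bot (A k')"
      using rle_bot[OF nal crel[OF ab] _ _ k'] K(1) ab by (simp add: nrel_def)
    then have "triv_inconsistent m A E3 K" using ab k' unfolding triv_inconsistent_def by blast
    then show ?thesis using K(4) by simp
  qed
qed



lemma upd_all:
  assumes "\<And>a b. a \<in> E \<Longrightarrow> b \<in> E \<Longrightarrow> a \<noteq> b \<Longrightarrow> \<not> (a = x \<and> b = z) \<Longrightarrow> \<not> (a = z \<and> b = x) \<Longrightarrow> Q a b (M a b)"
    "Q x z q" "Q z x r" "x \<noteq> z"
  shows "\<forall>a\<in>E. \<forall>b\<in>E. a \<noteq> b \<longrightarrow> Q a b (if a = x \<and> b = z then q else if a = z \<and> b = x then r else M a b)"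
proof (intro ballI impI)
  fix a b assume ab: "a \<in> E" "b \<in> E" "a \<noteq> b"
  show "Q a b (if a = x \<and> b = z then q else if a = z \<and> b = x then r else M a b)"
  proof (cases "a = x \<and> b = z")
    case True then show ?thesis using assms(2) by simp
  next
    case F1: False show ?thesis
    proof (cases "a = z \<and> b = x")
      case True then show ?thesis using assms(3,4) by simp
    next
      case False show ?thesis unfolding if_not_P[OF F1] if_not_P[OF False]
        by (rule assms(1)[OF ab F1 False])
    qed
  qed
qed

lemma upd_netok:
  assumes nal: "\<forall>k<m. nalg (A k)" and M: "netok m A E M" and xz: "x \<in> E" "z \<in> E" "x \<noteq> z" and q: "is_rel m A q"
  shows "netok m A E (\<lambda>a b. if a = x \<and> b = z then q else if a = z \<and> b = x then rconv m A q else M a b)"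
  unfolding netok_def
proof (intro ballI impI conjI)
  fix a b assume ab: "a \<in> E" "b \<in> E" "a \<noteq> b"
  have rel: "is_rel m A (M a b)" by (rule netok_relD[OF nal M ab])
  show "is_rel m A (if a = x \<and> b = z then q else if a = z \<and> b = x then rconv m A q else M a b)"
    using q rel nal by simp
  show "(if b = x \<and> a = z then q else if b = z \<and> a = x then rconv m A q else M b a) =
        rconv m A (if a = x \<and> b = z then q else if a = z \<and> b = x then rconv m A q else M a b)"
  proof (cases "a = x \<and> b = z")
    case True then show ?thesis using xz by simp
  next
    case F1: False show ?thesis
    proof (cases "a = z \<and> b = x")
      case True then show ?thesis using xz q nal by simp
    next
      case False
      have c1: "\<not> (b = x \<and> a = z)" "\<not> (b = z \<and> a = x)" using F1 False by blast+
      show ?thesis unfolding if_not_P[OF c1(1)] if_not_P[OF c1(2)] if_not_P[OF F1] if_not_P[OF False]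
        by (rule netok_symD[OF nal M ab])
    qed
  qed
qed

theorem proposition6p6:
  fixes m :: nat and A :: "nat \<Rightarrow> 'a nalg" and P :: "nat \<Rightarrow> nat \<Rightarrow> 'a \<Rightarrow> 'a"
    and S :: "'a list set"
  assumes "multi_algebra m A P"
    and "S \<subseteq> {R. is_rel m A R}"
    and "proj_closed_set m A P S"
    and "comp_meet_closed_set m A S"
    and "\<forall>i<m. \<forall>j<m. i \<noteq> j \<longrightarrow>
           (\<forall>E N. card E = 3 \<and>
              network_over 2 (bislice_alg A i j) (bislice_set S i j) E N \<longrightarrow>
              dissociable_net 2 (bislice_alg A i j) (bislice_proj P i j) E N)"
  shows "dissociable_set m A P S"
  unfolding dissociable_set_def
proof (intro allI impI)
  note ma = assms(1)
  have nal: "\<forall>k<m. nalg (A k)" using ma_nal[OF ma] .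
  have Srel: "\<And>R. R \<in> S \<Longrightarrow> is_rel m A R" using assms(2) by blast
  fix E N assume net: "network_over m A S E N"
  have fin: "finite E" using net by (simp add: network_over_def)
  have NS: "\<And>a b. a \<in> E \<Longrightarrow> b \<in> E \<Longrightarrow> a \<noteq> b \<Longrightarrow> N a b \<in> S" using net unfolding network_over_def by blast
  have Nsym: "\<And>a b. a \<in> E \<Longrightarrow> b \<in> E \<Longrightarrow> a \<noteq> b \<Longrightarrow> N b a = rconv m A (N a b)" using net unfolding network_over_def by blast
  define N1 where "N1 = (\<lambda>a b. proj_closure m A P (N a b))"
  define N' where "N' = comp_closure m A E N1"
  have N1S: "N1 a b \<in> S" if "a \<in> E" "b \<in> E" "a \<noteq> b" for a b
    using assms(3) NS[OF that] unfolding proj_closed_set_def N1_def by blast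
  have N1pc: "proj_closed m A P (N1 a b)" if "a \<in> E" "b \<in> E" "a \<noteq> b" for a b
    unfolding N1_def by (rule pclos(3)[OF ma Srel[OF NS[OF that]]])
  have N1ok: "netok m A E N1" unfolding netok_def
  proof (intro ballI impI conjI)
    fix a b assume ab: "a \<in> E" "b \<in> E" "a \<noteq> b"
    show "is_rel m A (N1 a b)" by (rule Srel[OF N1S[OF ab]])
    show "N1 b a = rconv m A (N1 a b)" unfolding N1_def Nsym[OF ab]
      by (rule pclos_rconv[OF ma Srel[OF NS[OF ab]]])
  qed
  note cl = cclos[OF nal fin N1ok, folded N'_def]
  have N'rel: "\<And>a b. a \<in> E \<Longrightarrow> b \<in> E \<Longrightarrow> a \<noteq> b \<Longrightarrow> is_rel m A (N' a b)" by (rule netok_relD[OF nal cl(1)])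
  have N'sym: "\<And>a b. a \<in> E \<Longrightarrow> b \<in> E \<Longrightarrow> a \<noteq> b \<Longrightarrow> N' b a = rconv m A (N' a b)" by (rule netok_symD[OF nal cl(1)])
  have "alg_consistent m A P E N' \<or> triv_inconsistent m A E N'"
  proof (cases "triv_inconsistent m A E N'")
    case True then show ?thesis by simp
  next
    case nt: False
    define good where "good = (\<lambda>M. netok m A E M \<and>
       (\<forall>a\<in>E. \<forall>b\<in>E. a \<noteq> b \<longrightarrow> M a b \<in> S \<and> proj_closed m A P (M a b)) \<and>
       nle m A E N' M \<and> nle m A E M N1)"
    have gN1: "good N1" unfolding good_def using N1ok N1S N1pc cl(2) nle_refl[OF nal N1ok] by blast
    obtain M where gM: "good M" and minM: "\<And>M'. good M' \<Longrightarrow> nsize m A E M \<le> nsize m A E M'"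
      using ex_has_least_nat[of good N1 "nsize m A E"] gN1 by blast
    have Mok: "netok m A E M" and MS: "\<And>a b. a \<in> E \<Longrightarrow> b \<in> E \<Longrightarrow> a \<noteq> b \<Longrightarrow> M a b \<in> S"
      and Mpc: "\<And>a b. a \<in> E \<Longrightarrow> b \<in> E \<Longrightarrow> a \<noteq> b \<Longrightarrow> proj_closed m A P (M a b)"
      and NM: "nle m A E N' M" and MN1: "nle m A E M N1" using gM unfolding good_def by blast+
    have Mrel: "\<And>a b. a \<in> E \<Longrightarrow> b \<in> E \<Longrightarrow> a \<noteq> b \<Longrightarrow> is_rel m A (M a b)" by (rule netok_relD[OF nal Mok])
    have Msym: "\<And>a b. a \<in> E \<Longrightarrow> b \<in> E \<Longrightarrow> a \<noteq> b \<Longrightarrow> M b a = rconv m A (M a b)" by (rule netok_symD[OF nal Mok])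
    have Mcc: "comp_closed m A E M"
    proof (rule ccontr)
      assume "\<not> comp_closed m A E M"
      then obtain x y z where xyz: "x \<in> E" "y \<in> E" "z \<in> E" "x \<noteq> y" "y \<noteq> z" "x \<noteq> z"
        and ncc: "\<not> rle m A (M x z) (rcomp m A (M x y) (M y z))"
        unfolding comp_closed_def by blast
      define s where "s = rmeet m A (rcomp m A (M x y) (M y z)) (M x z)"
      define q where "q = proj_closure m A P s"
      define M' where "M' = (\<lambda>a b. if a = x \<and> b = z then q else if a = z \<and> b = x then rconv m A q else M a b)"
      have sS: "s \<in> S" unfolding s_def using assms(4) MS xyz unfolding comp_meet_closed_set_def by blast
      have srel: "is_rel m A s" by (rule Srel[OF sS])
      have rzx: "is_rel m A (M z x)" using Mrel[OF xyz(3,1)] xyz(6) by simp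
      have qS: "q \<in> S" unfolding q_def using assms(3) sS unfolding proj_closed_set_def by blast
      note pq = pclos[OF ma srel, folded q_def]
      have qrel: "is_rel m A q" by (rule pq(1))
      have rxy: "is_rel m A (M x y)" by (rule Mrel[OF xyz(1,2,4)])
      have ryz: "is_rel m A (M y z)" by (rule Mrel[OF xyz(2,3,5)])
      have rxz: "is_rel m A (M x z)" by (rule Mrel[OF xyz(1,3,6)])
      have rc: "is_rel m A (rcomp m A (M x y) (M y z))" using rxy ryz nal by simp
      have s1: "rle m A s (rcomp m A (M x y) (M y z))" unfolding s_def by (rule rmeet_le1[OF nal rc rxz])
      have s2: "rle m A s (M x z)" unfolding s_def by (rule rmeet_le2[OF nal rc rxz])
      have qs: "rle m A q s" by (rule pq(2))
      have qM: "rle m A q (M x z)" by (rule rle_trans[OF nal qrel srel rxz qs s2])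
      have qne: "q \<noteq> M x z"
      proof
        assume "q = M x z"
        then have "rle m A (M x z) (rcomp m A (M x y) (M y z))"
          using rle_trans[OF nal qrel srel rc qs s1] by simp
        then show False using ncc by simp
      qed
      have rcs: "rconv m A s = rmeet m A (rcomp m A (M z y) (M y x)) (M z x)"
        unfolding s_def using rc rxz rxy ryz nal Msym[of x z] Msym[of y z] Msym[of x y] xyz
        by (simp add: rconv_rmeet[OF nal] rconv_rcomp[OF nal])
      have rcsS: "rconv m A s \<in> S" unfolding rcs using assms(4) MS xyz unfolding comp_meet_closed_set_def by blast
      have rcq: "rconv m A q = proj_closure m A P (rconv m A s)" unfolding q_def
        by (rule pclos_rconv[OF ma srel, symmetric])
      have rcqS: "rconv m A q \<in> S" unfolding rcq using assms(3) rcsS unfolding proj_closed_set_def by blast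
      have rcqpc: "proj_closed m A P (rconv m A q)" by (rule pc_rconv[OF ma qrel pq(3)])
      define E3 where "E3 = {x, y, z}"
      have E3E: "E3 \<subseteq> E" using xyz by (auto simp: E3_def)
      have fin3: "finite E3" by (simp add: E3_def)
      have M3: "netok m A E3 M" using Mok E3E unfolding netok_def by blast
      define c where "c = comp_closure m A E3 M"
      note cl3 = cclos[OF nal fin3 M3, folded c_def]
      have K1: "nrel m A E3 N'" using cl(1) E3E unfolding netok_def nrel_def by blast
      have K2: "comp_closed m A E3 N'" using cl(3) E3E unfolding comp_closed_def by blast
      have K3: "nle m A E3 N' M" using NM E3E unfolding nle_def by blast
      have K4: "\<not> triv_inconsistent m A E3 N'" using nt E3E unfolding triv_inconsistent_def by blast
      have cpc: "proj_closed m A P (c x z)" unfolding c_def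
        by (rule key[OF ma assms(5) E3_def xyz(4-6) M3 _ K1 K2 K3 K4]) (use MS Mpc E3E in blast)
      have x3: "x \<in> E3" "y \<in> E3" "z \<in> E3" by (auto simp: E3_def)
      have crel: "\<And>a b. a \<in> E3 \<Longrightarrow> b \<in> E3 \<Longrightarrow> a \<noteq> b \<Longrightarrow> is_rel m A (c a b)" by (rule netok_relD[OF nal cl3(1)])
      have cle: "rle m A (c a b) (M a b)" if "a \<in> E3" "b \<in> E3" "a \<noteq> b" for a b
        using cl3(2) that unfolding nle_def by blast
      have ccl: "rle m A (c x z) (rcomp m A (c x y) (c y z))" using cl3(3) x3 xyz unfolding comp_closed_def by blast
      have cxz_s: "rle m A (c x z) s" unfolding s_def
      proof (rule rmeet_glb[OF nal rc rxz crel[OF x3(1,3) xyz(6)]])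
        show "rle m A (c x z) (rcomp m A (M x y) (M y z))"
          using rle_trans[OF nal crel[OF x3(1,3) xyz(6)] _ rc ccl
                rcomp_mono[OF nal rxy ryz crel[OF x3(1,2) xyz(4)] crel[OF x3(2,3) xyz(5)] cle[OF x3(1,2) xyz(4)] cle[OF x3(2,3) xyz(5)]]]
            crel[OF x3(1,2) xyz(4)] crel[OF x3(2,3) xyz(5)] nal by simp
        show "rle m A (c x z) (M x z)" by (rule cle[OF x3(1,3) xyz(6)])
      qed
      have cq: "rle m A (c x z) q" by (rule pq(4)[OF crel[OF x3(1,3) xyz(6)] cpc cxz_s])
      have N'c: "rle m A (N' x z) (c x z)" using cl3(4)[OF K1 K2 K3] x3 xyz unfolding nle_def by blast
      have N'q: "rle m A (N' x z) q" by (rule rle_trans[OF nal N'rel[OF xyz(1,3,6)] crel[OF x3(1,3) xyz(6)] qrel N'c cq])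
      have N'q2: "rle m A (N' z x) (rconv m A q)"
        unfolding N'sym[OF xyz(1,3,6)] by (rule rconv_mono[OF nal qrel N'rel[OF xyz(1,3,6)] N'q])
      have M'ok: "netok m A E M'" unfolding M'_def by (rule upd_netok[OF nal Mok xyz(1,3,6) qrel])
      have g1: "\<forall>a\<in>E. \<forall>b\<in>E. a \<noteq> b \<longrightarrow> M' a b \<in> S \<and> proj_closed m A P (M' a b)"
        unfolding M'_def by (rule upd_all[where Q = "\<lambda>a b v. v \<in> S \<and> proj_closed m A P v"])
          (use MS Mpc in blast, use qS pq(3) in blast, use rcqS rcqpc in blast, rule xyz(6))
      have g2: "nle m A E N' M'" unfolding nle_def M'_def
        by (rule upd_all[where Q = "\<lambda>a b v. rle m A (N' a b) v"])
          (rule NM[unfolded nle_def, rule_format], assumption+, rule N'q, rule N'q2, rule xyz(6))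
      have N1xz: "is_rel m A (N1 x z)" by (rule netok_relD[OF nal N1ok xyz(1,3,6)])
      have N1zx: "is_rel m A (N1 z x)" using netok_relD[OF nal N1ok xyz(3,1)] xyz(6) by simp
      have MN1xz: "rle m A (M x z) (N1 x z)" using MN1[unfolded nle_def, rule_format, OF xyz(1,3,6)] .
      have MN1zx: "rle m A (M z x) (N1 z x)" using MN1[unfolded nle_def, rule_format, OF xyz(3,1)] xyz(6) by simp
      have qN1: "rle m A q (N1 x z)" by (rule rle_trans[OF nal qrel rxz N1xz qM MN1xz])
      have rcqrel: "is_rel m A (rconv m A q)" using qrel nal by simp
      have qM2: "rle m A (rconv m A q) (M z x)"
        using rconv_mono[OF nal rxz qrel qM] Msym[OF xyz(1,3,6)] by simp
      have qN2: "rle m A (rconv m A q) (N1 z x)" by (rule rle_trans[OF nal rcqrel rzx N1zx qM2 MN1zx])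
      have g3: "nle m A E M' N1" unfolding nle_def M'_def
        by (rule upd_all[where Q = "\<lambda>a b v. rle m A v (N1 a b)"])
          (rule MN1[unfolded nle_def, rule_format], assumption+, rule qN1, rule qN2, rule xyz(6))
      have gM': "good M'" using M'ok g1 g2 g3 unfolding good_def by (intro conjI) assumption+
      have M'M: "nle m A E M' M" unfolding nle_def M'_def
        by (rule upd_all[where Q = "\<lambda>a b v. rle m A v (M a b)"])
          (rule rle_refl[OF nal Mrel], assumption+, rule qM, rule qM2, rule xyz(6))
      have so: "same_out E M' M" unfolding same_out_def M'_def
      proof (intro allI impI)
        fix a b assume ab: "\<not> (a \<in> E \<and> b \<in> E \<and> a \<noteq> b)"
        have c1: "\<not> (a = x \<and> b = z)" "\<not> (a = z \<and> b = x)" using ab xyz by blast+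
        show "(if a = x \<and> b = z then q else if a = z \<and> b = x then rconv m A q else M a b) = M a b"
          unfolding if_not_P[OF c1(1)] if_not_P[OF c1(2)] ..
      qed
      have "M' x z = q" unfolding M'_def by simp
      then have "M' \<noteq> M" using qne by metis
      then have "nsize m A E M' < nsize m A E M" by (rule nsize_less[OF nal fin M'ok Mok M'M so])
      then show False using minM[OF gM'] by simp
    qed
    have MN': "nle m A E M N'" by (rule cl(4)[OF netok_rel[OF nal Mok] Mcc MN1])
    have eq: "N' a b = M a b" if "a \<in> E" "b \<in> E" "a \<noteq> b" for a b
      using MN' NM that N'rel[OF that] Mrel[OF that] rle_antisym[OF nal] unfolding nle_def by metis
    have "net_proj_closed m A P E N'" unfolding net_proj_closed_def using eq Mpc by simp
    then show ?thesis unfolding alg_consistent_def using cl(3) nt by simp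
  qed
  then show "dissociable_net m A P E N" unfolding dissociable_net_def Let_def N'_def N1_def .
qed


end
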